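(* Let $D$ be a reduced knot diagram with $n$ vertices and let $2\le k\le\infty$. Fix a version of the $k$-color region select game on $D$ and a checkerboard shading of $D$ whose unshaded regions admit an alternating signing; fix such a signing. Then the following hold. (1) For any shaded region $r$ and any unshaded region $r'$, every color configuration has a unique solving pattern in which $r$ and $r'$ are not pushed. (2) If $k$ is odd, then for any two unshaded regions of opposite signs, every color configuration has a unique solving pattern in which these two regions are not pushed. (3) Let $k<\infty$, let $S$ be a set of $i$ regions, and let $q$ be the number of color configurations having a solving pattern that does not push any region of $S$. - If $S$ contains at least one shaded and at least one unshaded region, then $q=k^{n+2-i}$. - If $i\ge1$ and $S$ consists only of shaded regions, or only of unshaded regions all of the same sign, then $q=k^{n+1-i}$. - If $S$ consists only of unshaded regions, not all of the same sign, then $q=k^{n+2-i}$ when $k$ is odd and $q=k^{n+2-i}/2$ when $k$ is even.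
   Context: Diagrams: a link (knot) diagram $D$ is the underlying graph of a regular projection of a link (knot) into $S^2$. Its vertices are the crossings, each of valence 4, and over/under information is ignored. Components without crossings are closed loops, each regarded as one edge with no vertices. Regions of $D$ are the connected components of $S^2\setminus D$. A vertex or edge is incident to a region if it lies in the boundary of that region. Two regions are adjacent if they are incident to a common edge. A vertex $v$ is reducible if some circle in $S^2$ meets $D$ transversely only at $v$, and irreducible otherwise. An irreducible vertex is incident to four distinct regions. A reducible vertex $v$ is incident to exactly three regions $r_0,r_1,r_2$, where $r_0$ touches $v$ from two sides and $r_1,r_2$ touch it from one side. A knot diagram with $n$ vertices has $n+2$ regions. A knot diagram is reduced if all its vertices are irreducible. Ring: for an integer $k\ge2$ let $\mathbb{Z}_k=\mathbb{Z}/k\mathbb{Z}$, and for $k=\infty$ let $\mathbb{Z}_\infty=\mathbb{Z}$. Game versions: a version of the $k$-color region select game on $D$ is a choice of an increment number $a(v,r)\in\mathbb{Z}_k$ for every incident vertex–region pair, subject to the following rules. - If $k<\infty$ and $v$ is irreducible, then $a(v,r)=a_v$ is the same for all regions $r$ incident to $v$, and $a_v$ is not a zero divisor of $\mathbb{Z}_k$. - If $k<\infty$ and $v$ is reducible, then $a(v,r_0)$ is arbitrary, while $a(v,r_1)$ and $a(v,r_2)$ are not zero divisors. - If $k=\infty$, then $a(v,r)=1$, except that $a(v,r_0)\in\mathbb{Z}$ is arbitrary when $v$ is reducible. - The original game is the version in which all increment numbers equal $1$. Game matrix: enumerate the vertices as $v_1,\dots,v_n$ and the regions as $r_1,\dots,r_m$.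 The game matrix is the $n\times m$ matrix $M$ over $\mathbb{Z}_k$ with $M_{ij}=a(v_i,r_j)$ if $v_i$ is incident to $r_j$, and $M_{ij}=0$ otherwise. Patterns and configurations: a push pattern is a vector $\mathbf p\in\mathbb{Z}_k^m$, and $\mathbf p(r_j)=p_j$ is the number of times $r_j$ is pushed. A region $r$ is not pushed in $\mathbf p$ if $\mathbf p(r)=0$. A color configuration is a vector $\mathbf c\in\mathbb{Z}_k^n$. Applying $\mathbf p$ to $\mathbf c$ yields $\mathbf c+M\mathbf p$. The configuration $\mathbf c$ is solvable if some $\mathbf p$ satisfies $M\mathbf p=-\mathbf c$; such a $\mathbf p$ is a solving pattern for $\mathbf c$. $D$ is always solvable in the version if every $\mathbf c\in\mathbb{Z}_k^n$ is solvable. A null pattern is an element of $Ker_k(M)=\{\mathbf p\in\mathbb{Z}_k^m: M\mathbf p=0\}$. Checkerboard shading: a checkerboard shading of $D$ is a shading of some of its regions such that, of any two adjacent regions, exactly one is shaded. Alternating signing: an alternating signing of the unshaded regions is an assignment of a sign $+$ or $-$ to each unshaded region such that every vertex is incident to two unshaded regions carrying opposite signs. *)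

theory Defs
  imports "HOL-Combinatorics.Permutations"
begin

text \<open>Knot diagrams are encoded as combinatorial maps (rotation systems) on a finite
set H of darts (half-edges): sigma is the rotation of darts around each crossing
(orbits of size 4 = vertices), alpha is the fixed-point-free involution pairing the
two darts of an edge, and the orbits of sigma o alpha are the regions (faces).
Genus 0 (the sphere) is expressed by Euler's formula V - E + F = 2, and the diagram
being a knot (one component) by the straight-ahead permutation having exactly two
orbits (the single component traversed in both directions).\<close>

definition orb :: "('d \<Rightarrow> 'd) \<Rightarrow> 'd \<Rightarrow> 'd set" where
  "orb f h = range (\<lambda>n. (f ^^ n) h)"

definition verts :: "'d set \<Rightarrow> ('d \<Rightarrow> 'd) \<Rightarrow> 'd set set" where
  "verts H \<sigma> = orb \<sigma> ` H"

definition edges :: "'d set \<Rightarrow> ('d \<Rightarrow> 'd) \<Rightarrow> 'd set set" where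
  "edges H \<alpha> = orb \<alpha> ` H"

definition regions :: "'d set \<Rightarrow> ('d \<Rightarrow> 'd) \<Rightarrow> ('d \<Rightarrow> 'd) \<Rightarrow> 'd set set" where
  "regions H \<sigma> \<alpha> = orb (\<sigma> \<circ> \<alpha>) ` H"

definition straight_orbits :: "'d set \<Rightarrow> ('d \<Rightarrow> 'd) \<Rightarrow> ('d \<Rightarrow> 'd) \<Rightarrow> 'd set set" where
  "straight_orbits H \<sigma> \<alpha> = orb (\<lambda>h. \<sigma> (\<sigma> (\<alpha> h))) ` H"

definition map_connected :: "'d set \<Rightarrow> ('d \<Rightarrow> 'd) \<Rightarrow> ('d \<Rightarrow> 'd) \<Rightarrow> bool" where
  "map_connected H \<sigma> \<alpha> \<longleftrightarrow>
     (\<forall>h\<in>H. \<forall>h'\<in>H. (h, h') \<in> {(x, y). x \<in> H \<and> (y = \<sigma> x \<or> y = \<alpha> x)}\<^sup>*)"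

definition knot_diagram :: "'d set \<Rightarrow> ('d \<Rightarrow> 'd) \<Rightarrow> ('d \<Rightarrow> 'd) \<Rightarrow> bool" where
  "knot_diagram H \<sigma> \<alpha> \<longleftrightarrow>
     finite H \<and> \<sigma> permutes H \<and> \<alpha> permutes H \<and>
     (\<forall>h\<in>H. \<alpha> h \<noteq> h \<and> \<alpha> (\<alpha> h) = h) \<and>
     (\<forall>h\<in>H. card (orb \<sigma> h) = 4) \<and>
     map_connected H \<sigma> \<alpha> \<and>
     int (card (verts H \<sigma>)) - int (card (edges H \<alpha>)) + int (card (regions H \<sigma> \<alpha>)) = 2 \<and>
     card (straight_orbits H \<sigma> \<alpha>) = 2"

text \<open>A vertex v and a region r are incident iff some corner of v lies in r;
the number of corners of v in r is card (v \<inter> r).\<close>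
definition incident :: "'d set \<Rightarrow> 'd set \<Rightarrow> bool" where
  "incident v r \<longleftrightarrow> v \<inter> r \<noteq> {}"

definition adjacent :: "('d \<Rightarrow> 'd) \<Rightarrow> 'd set \<Rightarrow> 'd set \<Rightarrow> bool" where
  "adjacent \<alpha> r r' \<longleftrightarrow> (\<exists>h\<in>r. \<alpha> h \<in> r')"

definition irreducible_vertex :: "'d set \<Rightarrow> ('d \<Rightarrow> 'd) \<Rightarrow> ('d \<Rightarrow> 'd) \<Rightarrow> 'd set \<Rightarrow> bool" where
  "irreducible_vertex H \<sigma> \<alpha> v \<longleftrightarrow> card {r \<in> regions H \<sigma> \<alpha>. incident v r} = 4"

definition reduced :: "'d set \<Rightarrow> ('d \<Rightarrow> 'd) \<Rightarrow> ('d \<Rightarrow> 'd) \<Rightarrow> bool" where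
  "reduced H \<sigma> \<alpha> \<longleftrightarrow> (\<forall>v\<in>verts H \<sigma>. irreducible_vertex H \<sigma> \<alpha> v)"

text \<open>The ring Z_k is represented by int modulo k, with k = 0 encoding k = infinity
(x mod 0 = x).  Versions of the game: increment numbers a v r (only relevant for
incident pairs).  Regions touching v from one side (card (v \<inter> r) = 1) get a
non-zero-divisor (a unit) for finite k and 1 for k = infinity; at irreducible
vertices all increments coincide in Z_k; the doubly touching region r0 at a
reducible vertex is arbitrary.\<close>
definition game_version :: "'d set \<Rightarrow> ('d \<Rightarrow> 'd) \<Rightarrow> ('d \<Rightarrow> 'd) \<Rightarrow> nat \<Rightarrow> ('d set \<Rightarrow> 'd set \<Rightarrow> int) \<Rightarrow> bool" where
  "game_version H \<sigma> \<alpha> k a \<longleftrightarrow>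
     (\<forall>v\<in>verts H \<sigma>. \<forall>r\<in>regions H \<sigma> \<alpha>. incident v r \<longrightarrow>
        (card (v \<inter> r) = 1 \<longrightarrow> (if k = 0 then a v r = 1 else coprime (a v r) (int k))) \<and>
        (irreducible_vertex H \<sigma> \<alpha> v \<longrightarrow>
           (\<forall>r'\<in>regions H \<sigma> \<alpha>. incident v r' \<longrightarrow> a v r mod int k = a v r' mod int k)))"

text \<open>Elements of Z_k^A, by canonical representatives (0..k-1, or all of int when k = 0),
extended by 0 outside A.\<close>
definition vecs :: "nat \<Rightarrow> 'x set \<Rightarrow> ('x \<Rightarrow> int) set" where
  "vecs k A = {p. (\<forall>x\<in>A. k \<noteq> 0 \<longrightarrow> 0 \<le> p x \<and> p x < int k) \<and> (\<forall>x. x \<notin> A \<longrightarrow> p x = 0)}"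

definition game_mult :: "'d set \<Rightarrow> ('d \<Rightarrow> 'd) \<Rightarrow> ('d \<Rightarrow> 'd) \<Rightarrow> ('d set \<Rightarrow> 'd set \<Rightarrow> int)
    \<Rightarrow> ('d set \<Rightarrow> int) \<Rightarrow> 'd set \<Rightarrow> int" where
  "game_mult H \<sigma> \<alpha> a p v = (\<Sum>r\<in>regions H \<sigma> \<alpha>. if incident v r then a v r * p r else 0)"

definition solving :: "'d set \<Rightarrow> ('d \<Rightarrow> 'd) \<Rightarrow> ('d \<Rightarrow> 'd) \<Rightarrow> nat \<Rightarrow> ('d set \<Rightarrow> 'd set \<Rightarrow> int)
    \<Rightarrow> ('d set \<Rightarrow> int) \<Rightarrow> ('d set \<Rightarrow> int) \<Rightarrow> bool" where
  "solving H \<sigma> \<alpha> k a c p \<longleftrightarrow>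
     (\<forall>v\<in>verts H \<sigma>. (game_mult H \<sigma> \<alpha> a p v + c v) mod int k = 0)"

definition checkerboard :: "'d set \<Rightarrow> ('d \<Rightarrow> 'd) \<Rightarrow> ('d \<Rightarrow> 'd) \<Rightarrow> 'd set set \<Rightarrow> bool" where
  "checkerboard H \<sigma> \<alpha> sh \<longleftrightarrow> sh \<subseteq> regions H \<sigma> \<alpha> \<and>
     (\<forall>r\<in>regions H \<sigma> \<alpha>. \<forall>r'\<in>regions H \<sigma> \<alpha>. adjacent \<alpha> r r' \<longrightarrow> (r \<in> sh \<longleftrightarrow> r' \<notin> sh))"

text \<open>Signs: True = +, False = -.\<close>
definition alternating_signing :: "'d set \<Rightarrow> ('d \<Rightarrow> 'd) \<Rightarrow> ('d \<Rightarrow> 'd) \<Rightarrow> 'd set set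
    \<Rightarrow> ('d set \<Rightarrow> bool) \<Rightarrow> bool" where
  "alternating_signing H \<sigma> \<alpha> sh sg \<longleftrightarrow>
     (\<forall>v\<in>verts H \<sigma>. \<exists>r\<in>regions H \<sigma> \<alpha> - sh. \<exists>r'\<in>regions H \<sigma> \<alpha> - sh.
        incident v r \<and> incident v r' \<and> sg r \<noteq> sg r')"

definition num_solvable_avoiding :: "'d set \<Rightarrow> ('d \<Rightarrow> 'd) \<Rightarrow> ('d \<Rightarrow> 'd) \<Rightarrow> nat
    \<Rightarrow> ('d set \<Rightarrow> 'd set \<Rightarrow> int) \<Rightarrow> 'd set set \<Rightarrow> nat" where
  "num_solvable_avoiding H \<sigma> \<alpha> k a S =
     card {c \<in> vecs k (verts H \<sigma>). \<exists>p\<in>vecs k (regions H \<sigma> \<alpha>).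
             (\<forall>r\<in>S. p r = 0) \<and> solving H \<sigma> \<alpha> k a c p}"

end

theory Submission
  imports Defs "HOL-Combinatorics.Orbits" "Jordan_Normal_Form.Determinant"
begin

lemma orb_perm: "permutation f \<Longrightarrow> orb f x = orbit f x"
  by (simp add: orb_def orbit_altdef_permutation full_SetCompr_eq)

lemma orb_self: "x \<in> orb f x"
  unfolding orb_def by (metis funpow_0 rangeI)

lemma orb_funpow: "(f^^n) x \<in> orb f x"
  unfolding orb_def by simp

lemma orb_sub: assumes "f permutes H" "x \<in> H" shows "orb f x \<subseteq> H"
proof
  fix y assume "y \<in> orb f x"
  then obtain n where y: "y = (f^^n) x" unfolding orb_def by auto
  have "(f^^n) x \<in> H" by (induction n) (use assms in \<open>auto simp: permutes_in_image\<close>)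
  then show "y \<in> H" using y by simp
qed

lemma orb_eq: assumes "permutation f" "y \<in> orb f x" shows "orb f y = orb f x"
proof -
  have e: "\<And>z. orb f z = orbit f z" using assms(1) by (rule orb_perm)
  have y: "y \<in> orbit f x" using assms(2) e by simp
  have x: "x \<in> orbit f x" using assms(1) by (rule permutation_self_in_orbit)
  have 1: "orbit f y \<subseteq> orbit f x" using y orbit_trans[of _ f y x] by blast
  have "x \<in> orbit f y" using orbit_swap[OF x y] .
  then have 2: "orbit f x \<subseteq> orbit f y" using orbit_trans[of _ f x y] by blast
  show ?thesis using 1 2 e by simp
qed

lemma orb_apply: assumes "permutation f" shows "orb f (f x) = orb f x"
proof -
  have "f x \<in> orb f x" using orb_funpow[where n=1 and f=f and x=x] by simp
  then show ?thesis using orb_eq[OF assms] by blast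
qed

lemma orb_disj: assumes "permutation f" "orb f x \<noteq> orb f y" shows "orb f x \<inter> orb f y = {}"
proof (rule ccontr)
  assume "orb f x \<inter> orb f y \<noteq> {}"
  then obtain z where "z \<in> orb f x" "z \<in> orb f y" by blast
  then have "orb f z = orb f x" "orb f z = orb f y" using orb_eq[OF assms(1)] by blast+
  then show False using assms(2) by simp
qed

lemma card_partition_orb:
  assumes "f permutes H" "finite H" "\<And>h. h \<in> H \<Longrightarrow> card (orb f h) = m"
  shows "card H = m * card (orb f ` H)"
proof -
  have pf: "permutation f" using assms permutation_permutes by blast
  have U1: "\<Union> (orb f ` H) \<subseteq> H" using orb_sub[OF assms(1)] by auto
  have U2: "H \<subseteq> \<Union> (orb f ` H)" using orb_self by fast
  have pw: "pairwise disjnt (orb f ` H)"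
    unfolding pairwise_def disjnt_def using orb_disj[OF pf] by auto
  have fin: "\<And>A. A\<in>orb f ` H \<Longrightarrow> finite A" using orb_sub[OF assms(1)] assms(2) by (auto intro: finite_subset)
  have "card (\<Union> (orb f ` H)) = sum card (orb f ` H)"
    using card_Union_disjoint[OF pw fin] .
  also have "\<dots> = sum (\<lambda>_. m) (orb f ` H)" using assms(3) by (intro sum.cong) auto
  finally show ?thesis using U1 U2 by simp
qed

lemma orb4:
  assumes "\<sigma> permutes H" "finite H" "card (orb \<sigma> h) = 4"
  shows "(\<sigma>^^4) h = h" "orb \<sigma> h = {h, \<sigma> h, \<sigma> (\<sigma> h), \<sigma> (\<sigma> (\<sigma> h))}"
    "distinct [h, \<sigma> h, \<sigma> (\<sigma> h), \<sigma> (\<sigma> (\<sigma> h))]"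
proof -
  have pf: "permutation \<sigma>" using assms permutation_permutes by blast
  have hs: "h \<in> orbit \<sigma> h" using pf permutation_self_in_orbit by metis
  define d where "d = funpow_dist1 \<sigma> h h"
  have o: "orbit \<sigma> h = (\<lambda>n. (\<sigma>^^n) h) ` {0..<d}" using orbit_conv_funpow_dist1[OF hs] d_def by simp
  have inj: "inj_on (\<lambda>n. (\<sigma>^^n) h) {0..<d}" using inj_on_funpow_dist1[OF hs] d_def by simp
  have "card (orbit \<sigma> h) = d" using o inj card_image by fastforce
  then have d4: "d = 4" using assms(3) orb_perm[OF pf] by simp
  show "(\<sigma>^^4) h = h" using funpow_dist1_prop[OF hs] unfolding d_def[symmetric] d4 .
  have e: "{0..<4::nat} = {0,1,2,3}" by auto
  have n: "(\<sigma>^^2) h = \<sigma> (\<sigma> h)" "(\<sigma>^^3) h = \<sigma> (\<sigma> (\<sigma> h))"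
    by (simp_all add: numeral_eq_Suc)
  show "orb \<sigma> h = {h, \<sigma> h, \<sigma> (\<sigma> h), \<sigma> (\<sigma> (\<sigma> h))}"
    using o d4 orb_perm[OF pf] e n by auto
  have ne: "\<And>i j. i < 4 \<Longrightarrow> j < 4 \<Longrightarrow> i \<noteq> j \<Longrightarrow> (\<sigma>^^i) h \<noteq> (\<sigma>^^j) h"
    using inj d4 unfolding inj_on_def by auto
  show "distinct [h, \<sigma> h, \<sigma> (\<sigma> h), \<sigma> (\<sigma> (\<sigma> h))]"
    using ne[of 0 1] ne[of 0 2] ne[of 0 3] ne[of 1 2] ne[of 1 3] ne[of 2 3] n by auto
qed

lemma det_mod_cong:
  fixes A B :: "int mat"
  assumes A: "A \<in> carrier_mat n n" and B: "B \<in> carrier_mat n n"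
    and e: "\<forall>i<n. \<forall>j<n. A$$(i,j) mod m = B$$(i,j) mod m"
  shows "det A mod m = det B mod m"
proof -
  have pr: "(\<Prod>i=0..<n. A$$(i,p i)) mod m = (\<Prod>i=0..<n. B$$(i,p i)) mod m"
    if p: "p permutes {0..<n}" for p
  proof -
    have pi: "\<And>i. i \<in> {0..<n} \<Longrightarrow> p i < n" using p permutes_in_image by fastforce
    have "(\<Prod>i=0..<n. A$$(i,p i) mod m) = (\<Prod>i=0..<n. B$$(i,p i) mod m)"
      using e pi by (intro prod.cong) auto
    then have "(\<Prod>i=0..<n. A$$(i,p i) mod m) mod m = (\<Prod>i=0..<n. B$$(i,p i) mod m) mod m"
      by simp
    then show ?thesis by (simp add: mod_prod_eq)
  qed
  have tm: "(signof p * (\<Prod>i=0..<n. A$$(i,p i))) mod m = (signof p * (\<Prod>i=0..<n. B$$(i,p i))) mod m"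
    if p: "p permutes {0..<n}" for p
    by (rule mod_mult_cong[OF refl pr[OF p]])
  have s1: "det A mod m = (\<Sum>p\<in>{p. p permutes {0..<n}}. (signof p * (\<Prod>i=0..<n. A$$(i,p i))) mod m) mod m"
    using det_def'[OF A] by (simp add: mod_sum_eq)
  have s2: "det B mod m = (\<Sum>p\<in>{p. p permutes {0..<n}}. (signof p * (\<Prod>i=0..<n. B$$(i,p i))) mod m) mod m"
    using det_def'[OF B] by (simp add: mod_sum_eq)
  have "(\<Sum>p\<in>{p. p permutes {0..<n}}. (signof p * (\<Prod>i=0..<n. A$$(i,p i))) mod m)
     = (\<Sum>p\<in>{p. p permutes {0..<n}}. (signof p * (\<Prod>i=0..<n. B$$(i,p i))) mod m)"
    using tm by (intro sum.cong) auto
  then show ?thesis using s1 s2 by simp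
qed

lemma mult_mat_entry:
  fixes f g :: "nat \<Rightarrow> nat \<Rightarrow> int"
  assumes "i < n" "j < n"
  shows "(mat n n (\<lambda>(i,j). f i j) * mat n n (\<lambda>(i,j). g i j)) $$ (i,j) = (\<Sum>l<n. f i l * g l j)"
  using assms by (simp add: scalar_prod_def atLeast0LessThan)

lemma int_surj:
  fixes f :: "nat \<Rightarrow> nat \<Rightarrow> int" and n :: nat
  assumes H: "\<And>m c. m \<ge> 2 \<Longrightarrow> \<exists>x. \<forall>i<n. m dvd ((\<Sum>j<n. f i j * x j) - c i)"
  shows "\<exists>x. \<forall>i<n. (\<Sum>j<n. f i j * x j) = c i"
proof -
  define A where "A = mat n n (\<lambda>(i,j). f i j)"
  have A: "A \<in> carrier_mat n n" unfolding A_def by simp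
  define d where "d = det A"
  have inv: "\<exists>e. (d * e) mod m = 1" if m: "m \<ge> 2" for m :: int
  proof -
    have "\<forall>j. \<exists>x. \<forall>i<n. m dvd ((\<Sum>l<n. f i l * x l) - (if i = j then 1 else 0))"
    proof
      fix j show "\<exists>x. \<forall>i<n. m dvd ((\<Sum>l<n. f i l * x l) - (if i = j then 1 else 0))"
        using H[OF m, of "\<lambda>i. if i = j then 1 else 0"] by simp
    qed
    from choice[OF this] obtain X where X0: "\<forall>j. \<forall>i<n. m dvd ((\<Sum>l<n. f i l * X j l) - (if i = j then 1 else 0))"
      by blast
    then have X: "\<And>j i. i < n \<Longrightarrow> m dvd ((\<Sum>l<n. f i l * X j l) - (if i = j then 1 else 0))"
      by blast
    define B where "B = mat n n (\<lambda>(l,j). X j l)"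
    have B: "B \<in> carrier_mat n n" unfolding B_def by simp
    have AB: "A * B \<in> carrier_mat n n" using A B by simp
    have "\<forall>i<n. \<forall>j<n. (A*B)$$(i,j) mod m = (1\<^sub>m n)$$(i,j) mod m"
    proof (intro allI impI)
      fix i j assume ij: "i < n" "j < n"
      have "(A*B)$$(i,j) = (\<Sum>l<n. f i l * X j l)"
        unfolding A_def B_def using mult_mat_entry[OF ij, of f "\<lambda>l j. X j l"] by simp
      then show "(A*B)$$(i,j) mod m = (1\<^sub>m n)$$(i,j) mod m"
        using X[OF ij(1), of j] ij by (simp add: mod_eq_dvd_iff)
    qed
    from det_mod_cong[OF AB one_carrier_mat this]
    have "det (A*B) mod m = 1" using m by simp
    then have "(d * det B) mod m = 1" using det_mult[OF A B] d_def by simp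
    then show ?thesis by blast
  qed
  have d1: "d * d = 1"
  proof (rule ccontr)
    assume nd: "d * d \<noteq> 1"
    show False
    proof (cases "d = 0")
      case True then show False using inv[of 2] by simp
    next
      case False
      have "\<bar>d\<bar> \<noteq> 1" using nd by (auto simp: abs_if split: if_splits)
      then have "\<bar>d\<bar> \<ge> 2" using False by linarith
      from inv[OF this] obtain e where "(d*e) mod \<bar>d\<bar> = 1" by blast
      then show False by simp
    qed
  qed
  define Adj where "Adj = adj_mat A"
  have Adj: "Adj \<in> carrier_mat n n" using adj_mat(1)[OF A] Adj_def by simp
  have AA: "A * Adj = d \<cdot>\<^sub>m 1\<^sub>m n" using adj_mat(2)[OF A] Adj_def d_def by simp
  have ent: "(\<Sum>j<n. f i j * Adj$$(j,l)) = (if i = l then d else 0)" if "i < n" "l < n" for i l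
  proof -
    have "(A * Adj)$$(i,l) = (\<Sum>j<n. f i j * Adj$$(j,l))"
      using that Adj unfolding A_def by (simp add: scalar_prod_def atLeast0LessThan)
    then show ?thesis using AA that by (auto split: if_splits)
  qed
  define x where "x = (\<lambda>j. d * (\<Sum>l<n. Adj$$(j,l) * c l))"
  have "(\<Sum>j<n. f i j * x j) = c i" if i: "i < n" for i
  proof -
    have "(\<Sum>j<n. f i j * x j) = (\<Sum>j<n. \<Sum>l<n. d * (f i j * Adj$$(j,l) * c l))"
      unfolding x_def by (simp add: sum_distrib_left mult_ac)
    also have "\<dots> = (\<Sum>l<n. \<Sum>j<n. d * (f i j * Adj$$(j,l) * c l))"
      by (rule sum.swap)
    also have "\<dots> = d * (\<Sum>l<n. (\<Sum>j<n. f i j * Adj$$(j,l)) * c l)"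
      by (simp add: sum_distrib_left sum_distrib_right mult_ac)
    also have "\<dots> = d * (\<Sum>l<n. (if i = l then d * c l else 0))"
      using ent[OF i] by (intro arg_cong[where f="\<lambda>z. d * z"] sum.cong) auto
    also have "\<dots> = d * d * c i" using i by simp
    finally show ?thesis using d1 by simp
  qed
  then show ?thesis by blast
qed



locale kd =
  fixes H :: "'d set" and \<sigma> \<alpha> :: "'d \<Rightarrow> 'd" and k :: nat
    and a :: "'d set \<Rightarrow> 'd set \<Rightarrow> int" and sh :: "'d set set" and sg :: "'d set \<Rightarrow> bool"
  assumes D: "knot_diagram H \<sigma> \<alpha>" and red: "reduced H \<sigma> \<alpha>"
    and ver: "game_version H \<sigma> \<alpha> k a"
    and cb: "checkerboard H \<sigma> \<alpha> sh"
    and sgn: "alternating_signing H \<sigma> \<alpha> sh sg"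
begin

abbreviation "K \<equiv> int k"
abbreviation "F \<equiv> regions H \<sigma> \<alpha>"
abbreviation "VS \<equiv> verts H \<sigma>"

lemma fin: "finite H" and sp: "\<sigma> permutes H" and ap: "\<alpha> permutes H"
  and anf: "h \<in> H \<Longrightarrow> \<alpha> h \<noteq> h" and aa: "h \<in> H \<Longrightarrow> \<alpha> (\<alpha> h) = h"
  and c4: "h \<in> H \<Longrightarrow> card (orb \<sigma> h) = 4"
  and conn: "map_connected H \<sigma> \<alpha>"
  and eul: "int (card (verts H \<sigma>)) - int (card (edges H \<alpha>)) + int (card (regions H \<sigma> \<alpha>)) = 2"
  and so2: "card (straight_orbits H \<sigma> \<alpha>) = 2"
  using D unfolding knot_diagram_def by auto

lemma psig: "permutation \<sigma>" using sp fin permutation_permutes by blast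
lemma pal: "permutation \<alpha>" using ap fin permutation_permutes by blast
lemma sap: "\<sigma> \<circ> \<alpha> permutes H" using permutes_compose[OF ap sp] .
lemma psa: "permutation (\<sigma> \<circ> \<alpha>)" using sap fin permutation_permutes by blast
lemma sH: "x \<in> H \<Longrightarrow> \<sigma> x \<in> H" using sp by (simp add: permutes_in_image)
lemma aH: "x \<in> H \<Longrightarrow> \<alpha> x \<in> H" using ap by (simp add: permutes_in_image)
lemma sinj: "inj \<sigma>" using sp by (rule permutes_inj)
lemma ainj: "inj \<alpha>" using ap by (rule permutes_inj)

lemma sig4: "x \<in> H \<Longrightarrow> \<sigma> (\<sigma> (\<sigma> (\<sigma> x))) = x"
  using orb4(1)[OF sp fin c4] by (simp add: numeral_eq_Suc)

definition V :: "'d \<Rightarrow> 'd set" where "V x = orb \<sigma> x"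

lemma V4: "x \<in> H \<Longrightarrow> V x = {x, \<sigma> x, \<sigma> (\<sigma> x), \<sigma> (\<sigma> (\<sigma> x))}"
  unfolding V_def using orb4(2)[OF sp fin c4] .
lemma Vdist: "x \<in> H \<Longrightarrow> distinct [x, \<sigma> x, \<sigma> (\<sigma> x), \<sigma> (\<sigma> (\<sigma> x))]"
  using orb4(3)[OF sp fin c4] .
lemma V_sub: "x \<in> H \<Longrightarrow> V x \<subseteq> H" unfolding V_def using orb_sub[OF sp] .
lemma VS_eq: "VS = V ` H" unfolding verts_def V_def by simp
lemma finV: "x \<in> H \<Longrightarrow> finite (V x)" using V4 by simp
lemma cardV: "x \<in> H \<Longrightarrow> card (V x) = 4" using c4 V_def by simp

definition R :: "'d \<Rightarrow> 'd set" where "R x = orb (\<sigma> \<circ> \<alpha>) x"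

lemma R_self: "x \<in> R x" unfolding R_def by (rule orb_self)
lemma R_sub: "x \<in> H \<Longrightarrow> R x \<subseteq> H" unfolding R_def using orb_sub[OF sap] .
lemma F_eq: "F = R ` H" unfolding regions_def R_def by simp
lemma R_in: "x \<in> H \<Longrightarrow> R x \<in> F" using F_eq by simp
lemma R_eq: "y \<in> R x \<Longrightarrow> R y = R x" unfolding R_def using orb_eq[OF psa] .
lemma R_sa: "R (\<sigma> (\<alpha> x)) = R x" unfolding R_def using orb_apply[OF psa, of x] by simp
lemma R_s: "x \<in> H \<Longrightarrow> R (\<sigma> x) = R (\<alpha> x)" using R_sa[of "\<alpha> x"] aa by simp
lemma F_R: "r \<in> F \<Longrightarrow> x \<in> r \<Longrightarrow> R x = r" using F_eq R_eq by auto
lemma finF: "finite F" using F_eq fin by simp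
lemma finVS: "finite VS" using VS_eq fin by simp

lemma inc_eq: assumes x: "x \<in> H" shows "{r \<in> F. incident (V x) r} = R ` V x"
proof -
  have 1: "r \<in> R ` V x" if "r \<in> F" "incident (V x) r" for r
  proof -
    have "V x \<inter> r \<noteq> {}" using that(2) by (simp add: incident_def)
    then obtain y where "y \<in> V x" "y \<in> r" by blast
    then show ?thesis using F_R that by blast
  qed
  have 2: "r \<in> F \<and> incident (V x) r" if rr: "r \<in> R ` V x" for r
  proof -
    obtain y where y: "y \<in> V x" "r = R y" using rr by auto
    then have "y \<in> H" using V_sub x by auto
    then show ?thesis using y R_in R_self unfolding incident_def by auto
  qed
  show ?thesis using 1 2 by blast
qed

lemma Rinj: "x \<in> H \<Longrightarrow> inj_on R (V x)"
proof -
  assume x: "x \<in> H"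
  have "V x \<in> VS" using x VS_eq by simp
  then have "card {r \<in> F. incident (V x) r} = 4" using red unfolding reduced_def irreducible_vertex_def by blast
  then have "card (R ` V x) = card (V x)" using inc_eq[OF x] cardV[OF x] by simp
  then show ?thesis using inj_on_iff_eq_card finV[OF x] by blast
qed

lemma Rdist: "x \<in> H \<Longrightarrow> distinct [R x, R (\<sigma> x), R (\<sigma> (\<sigma> x)), R (\<sigma> (\<sigma> (\<sigma> x)))]"
proof -
  assume x: "x \<in> H"
  have i: "inj_on R {x, \<sigma> x, \<sigma> (\<sigma> x), \<sigma> (\<sigma> (\<sigma> x))}" using Rinj[OF x] V4[OF x] by simp
  have d: "distinct [x, \<sigma> x, \<sigma> (\<sigma> x), \<sigma> (\<sigma> (\<sigma> x))]" using Vdist[OF x] .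
  show ?thesis using inj_on_contraD[OF i] d by simp
qed

lemma VR_one: "x \<in> H \<Longrightarrow> y \<in> V x \<Longrightarrow> V x \<inter> R y = {y}"
proof -
  assume x: "x \<in> H" and y: "y \<in> V x"
  have "z = y" if "z \<in> V x" "z \<in> R y" for z
    using inj_onD[OF Rinj[OF x] R_eq[OF that(2)] that(1) y] .
  then show ?thesis using y R_self by blast
qed

definition E1 :: "'d set \<Rightarrow> int" where "E1 r = (if r \<in> sh then 1 else -1)"
definition E2 :: "'d set \<Rightarrow> int" where "E2 r = (if r \<in> sh then 0 else if sg r then 1 else -1)"

lemma E1sq: "E1 r * E1 r = 1" unfolding E1_def by simp

lemma sh_a: "x \<in> H \<Longrightarrow> (R (\<alpha> x) \<in> sh) = (R x \<notin> sh)"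
proof -
  assume x: "x \<in> H"
  have "adjacent \<alpha> (R x) (R (\<alpha> x))" unfolding adjacent_def using R_self by blast
  then show ?thesis using cb R_in[OF x] R_in[OF aH[OF x]] unfolding checkerboard_def by blast
qed

lemma sh_s: "x \<in> H \<Longrightarrow> (R (\<sigma> x) \<in> sh) = (R x \<notin> sh)"
  using sh_a R_s by simp

definition S :: "('d set \<Rightarrow> int) \<Rightarrow> 'd \<Rightarrow> int" where "S p x = (\<Sum>y\<in>V x. p (R y))"

lemma S4: "x \<in> H \<Longrightarrow> S p x = p (R x) + p (R (\<sigma> x)) + p (R (\<sigma> (\<sigma> x))) + p (R (\<sigma> (\<sigma> (\<sigma> x))))"
  unfolding S_def using V4 Vdist by simp


definition L :: "('d set \<Rightarrow> int) \<Rightarrow> 'd set \<Rightarrow> int" where "L p v = game_mult H \<sigma> \<alpha> a p v"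

lemma L_V: assumes x: "x \<in> H" shows "L p (V x) = (\<Sum>y\<in>V x. a (V x) (R y) * p (R y))"
proof -
  have "L p (V x) = (\<Sum>r\<in>{r \<in> F. incident (V x) r}. a (V x) r * p r)"
    unfolding L_def game_mult_def using finF by (simp add: sum.inter_filter)
  also have "\<dots> = (\<Sum>r\<in>R ` V x. a (V x) r * p r)" using inc_eq[OF x] by simp
  also have "\<dots> = (\<Sum>y\<in>V x. a (V x) (R y) * p (R y))" using sum.reindex[OF Rinj[OF x]] by simp
  finally show ?thesis .
qed

lemma a_cong: assumes x: "x \<in> H" and y: "y \<in> V x" shows "K dvd (a (V x) (R y) - a (V x) (R x))"
proof -
  have yH: "y \<in> H" using V_sub[OF x] y by auto
  have vx: "V x \<in> VS" using VS_eq x by simp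
  have irr: "irreducible_vertex H \<sigma> \<alpha> (V x)" using red vx unfolding reduced_def by blast
  have inc: "incident (V x) (R z)" if "z \<in> V x" for z using that R_self unfolding incident_def by blast
  have "a (V x) (R y) mod K = a (V x) (R x) mod K"
    using ver vx R_in[OF yH] R_in[OF x] inc[OF y] inc[of x] irr V4[OF x]
    unfolding game_version_def by blast
  then show ?thesis by (simp add: mod_eq_dvd_iff)
qed

lemma a_cop: assumes x: "x \<in> H" shows "coprime (a (V x) (R x)) K"
proof -
  have vx: "V x \<in> VS" using VS_eq x by simp
  have xv: "x \<in> V x" using V4[OF x] by simp
  have one: "card (V x \<inter> R x) = 1" using VR_one[OF x xv] by simp
  have inc: "incident (V x) (R x)" using xv R_self unfolding incident_def by blast
  have "(if k = 0 then a (V x) (R x) = 1 else coprime (a (V x) (R x)) K)"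
    using ver vx R_in[OF x] inc one unfolding game_version_def by blast
  then show ?thesis by (cases "k = 0") auto
qed

lemma L_S: assumes x: "x \<in> H" shows "K dvd (L p (V x) - a (V x) (R x) * S p x)"
proof -
  have "L p (V x) - a (V x) (R x) * S p x = (\<Sum>y\<in>V x. (a (V x) (R y) - a (V x) (R x)) * p (R y))"
    unfolding L_V[OF x] S_def by (simp add: sum_distrib_left sum_subtractf[symmetric] algebra_simps)
  also have "K dvd \<dots>" using a_cong[OF x] by (intro dvd_sum) auto
  finally show ?thesis .
qed

definition null :: "('d set \<Rightarrow> int) \<Rightarrow> bool" where "null p \<longleftrightarrow> (\<forall>v\<in>VS. K dvd L p v)"

lemma dvdL_iff: assumes x: "x \<in> H" shows "K dvd L p (V x) \<longleftrightarrow> K dvd S p x"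
proof -
  have "K dvd L p (V x) \<longleftrightarrow> K dvd a (V x) (R x) * S p x"
    using L_S[OF x, of p] by (metis dvd_add_right_iff diff_add_cancel)
  also have "\<dots> \<longleftrightarrow> K dvd S p x"
    using a_cop[OF x] by (simp add: coprime_dvd_mult_right_iff coprime_commute)
  finally show ?thesis .
qed

lemma null_iff: "null p \<longleftrightarrow> (\<forall>x\<in>H. K dvd S p x)"
  unfolding null_def VS_eq using dvdL_iff by auto

lemma E1_null: "x \<in> H \<Longrightarrow> S E1 x = 0"
  using sh_s[of x] sh_s[of "\<sigma> x"] sh_s[of "\<sigma> (\<sigma> x)"] sH S4 unfolding E1_def by auto

lemma E2_null: assumes x: "x \<in> H" shows "S E2 x = 0"
proof -
  have vx: "V x \<in> VS" using VS_eq x by simp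
  obtain r r' where rr: "r \<in> F - sh" "r' \<in> F - sh" "incident (V x) r" "incident (V x) r'" "sg r \<noteq> sg r'"
    using sgn vx unfolding alternating_signing_def by blast
  have "r \<in> R ` V x" "r' \<in> R ` V x" using rr inc_eq[OF x] by auto
  then have rin: "r \<in> {R x, R (\<sigma> x), R (\<sigma> (\<sigma> x)), R (\<sigma> (\<sigma> (\<sigma> x)))}"
     "r' \<in> {R x, R (\<sigma> x), R (\<sigma> (\<sigma> x)), R (\<sigma> (\<sigma> (\<sigma> x)))}" using V4[OF x] by auto
  have s1: "(R (\<sigma> x) \<in> sh) = (R x \<notin> sh)" using sh_s[OF x] .
  have s2: "(R (\<sigma> (\<sigma> x)) \<in> sh) = (R x \<in> sh)" using sh_s[OF sH[OF x]] s1 by simp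
  have s3: "(R (\<sigma> (\<sigma> (\<sigma> x))) \<in> sh) = (R x \<notin> sh)" using sh_s[OF sH[OF sH[OF x]]] s2 by simp
  have ne: "r \<noteq> r'" using rr by auto
  show ?thesis using rin rr(1,2,5) ne s1 s2 s3 S4[OF x, of E2] unfolding E2_def
    by (cases "R x \<in> sh") auto
qed

lemma S_lin: "S (\<lambda>r. u * p r + t * q r) x = u * S p x + t * S q x"
  unfolding S_def by (simp add: sum.distrib sum_distrib_left)

lemma S_diff: "S (\<lambda>r. p r - q r) x = S p x - S q x"
  unfolding S_def by (simp add: sum_subtractf)

definition fp :: "('d set \<Rightarrow> int) \<Rightarrow> 'd \<Rightarrow> int" where "fp p x = p (R x) + p (R (\<alpha> x))"

definition g :: "'d \<Rightarrow> 'd" where "g x = \<sigma> (\<sigma> (\<alpha> x))"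

lemma gH: "x \<in> H \<Longrightarrow> g x \<in> H" unfolding g_def using sH aH by simp
lemma gnH: "x \<in> H \<Longrightarrow> (g^^n) x \<in> H" by (induction n) (auto simp: gH)
lemma ginj: "inj g"
proof (rule injI)
  fix x y assume "g x = g y"
  then have "\<sigma> (\<sigma> (\<alpha> x)) = \<sigma> (\<sigma> (\<alpha> y))" by (simp add: g_def)
  then show "x = y" using sinj ainj by (metis injD)
qed

lemma S_fp: assumes x: "x \<in> H" shows "S p x = fp p x + fp p (\<sigma> (\<sigma> x))"
proof -
  have e1: "R (\<sigma> x) = R (\<alpha> x)" by (rule R_s[OF x])
  have e3: "R (\<sigma> (\<sigma> (\<sigma> x))) = R (\<alpha> (\<sigma> (\<sigma> x)))" by (rule R_s[OF sH[OF sH[OF x]]])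
  show ?thesis unfolding S4[OF x] fp_def e1 e3 by (simp add: add.assoc)
qed

lemma fp_a: "x \<in> H \<Longrightarrow> fp p (\<alpha> x) = fp p x" unfolding fp_def using aa by (simp add: add.commute)

lemma fp_g: assumes x: "x \<in> H" and n: "null p" shows "K dvd (fp p (g x) + fp p x)"
proof -
  have "K dvd S p (\<alpha> x)" using n null_iff aH[OF x] by blast
  moreover have "S p (\<alpha> x) = fp p x + fp p (g x)" using S_fp[OF aH[OF x]] fp_a[OF x] g_def by simp
  ultimately show ?thesis by (simp add: add.commute)
qed

lemma fp_gn: assumes x: "x \<in> H" and n: "null p" shows "K dvd (fp p ((g^^m) x) - (-1)^m * fp p x)"
proof (induction m)
  case 0 then show ?case by simp
next
  case (Suc m)
  have y: "(g^^m) x \<in> H" using gnH x by blast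
  have "fp p ((g^^Suc m) x) - (-1)^Suc m * fp p x =
      (fp p (g ((g^^m) x)) + fp p ((g^^m) x)) - (fp p ((g^^m) x) - (-1)^m * fp p x)" by simp
  also have "K dvd \<dots>" using fp_g[OF y n] Suc by (rule dvd_diff)
  finally show ?case .
qed

lemma gag: "x \<in> H \<Longrightarrow> g (\<alpha> (g x)) = \<alpha> x"
  unfolding g_def using aa sH aH sig4 by simp

lemma gag_n: "x \<in> H \<Longrightarrow> (g^^i) (\<alpha> ((g^^i) x)) = \<alpha> x"
proof (induction i)
  case 0 then show ?case by simp
next
  case (Suc i)
  have y: "(g^^i) x \<in> H" using gnH Suc by blast
  have e1: "(g^^Suc i) x = g ((g^^i) x)" by simp
  have e2: "(g^^Suc i) z = (g^^i) (g z)" for z by (simp add: funpow_Suc_right del: funpow.simps)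
  have "(g^^Suc i) (\<alpha> ((g^^Suc i) x)) = (g^^i) (g (\<alpha> (g ((g^^i) x))))"
    by (simp only: e1) (simp only: e2)
  also have "\<dots> = (g^^i) (\<alpha> ((g^^i) x))" using gag[OF y] by simp
  finally show ?case using Suc by simp
qed

lemma a_not_in_orb: assumes x: "x \<in> H" shows "\<alpha> x \<notin> orb g x"
proof
  assume "\<alpha> x \<in> orb g x"
  then obtain j where j: "\<alpha> x = (g^^j) x" unfolding orb_def by auto
  have key: "\<alpha> ((g^^i) x) = (g^^(j - i)) x" if "i \<le> j" for i
  proof -
    have "(g^^i) (\<alpha> ((g^^i) x)) = (g^^i) ((g^^(j - i)) x)"
      using gag_n[OF x, of i] j that by (simp add: funpow_add[symmetric, THEN fun_cong, simplified comp_def] )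
    then show ?thesis using inj_fn[OF ginj, of i] by (simp add: inj_def)
  qed
  show False
  proof (cases "even j")
    case True
    then obtain i where i: "j = 2 * i" by blast
    have "\<alpha> ((g^^i) x) = (g^^i) x" using key[of i] i by simp
    then show False using anf gnH x by blast
  next
    case False
    then obtain i where i: "j = 2 * i + 1" using oddE by blast
    have "\<alpha> ((g^^i) x) = g ((g^^i) x)" using key[of i] i by simp
    then have e: "\<sigma> (\<sigma> (\<alpha> ((g^^i) x))) = \<alpha> ((g^^i) x)" unfolding g_def by simp
    have zH: "\<alpha> ((g^^i) x) \<in> H" using aH gnH x by blast
    then show False using Vdist[OF zH] e by auto
  qed
qed

lemma H_two_orbs: assumes x: "x \<in> H" and y: "y \<in> H" shows "y \<in> orb g x \<or> y \<in> orb g (\<alpha> x)"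
proof -
  have geq: "(\<lambda>h. \<sigma> (\<sigma> (\<alpha> h))) = g" unfolding g_def by auto
  define SO where "SO = straight_orbits H \<sigma> \<alpha>"
  have SOe: "SO = orb g ` H" unfolding SO_def straight_orbits_def geq ..
  have ne: "orb g x \<noteq> orb g (\<alpha> x)" using a_not_in_orb[OF x] orb_self[of "\<alpha> x" g] by auto
  have sub: "{orb g x, orb g (\<alpha> x)} \<subseteq> SO" using SOe x aH[OF x] by auto
  have "card {orb g x, orb g (\<alpha> x)} = 2" using ne by simp
  moreover have "finite SO" using SOe fin by simp
  ultimately have "{orb g x, orb g (\<alpha> x)} = SO" using card_subset_eq[OF _ sub] so2 SO_def by simp
  then have "orb g y \<in> {orb g x, orb g (\<alpha> x)}" using SOe y by auto
  then show ?thesis using orb_self[of y g] by auto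
qed

lemma Hne: "H \<noteq> {}"
proof
  assume "H = {}"
  then have "verts H \<sigma> = {}" "edges H \<alpha> = {}" "regions H \<sigma> \<alpha> = {}"
    unfolding verts_def edges_def regions_def by auto
  then show False using eul by simp
qed

lemma fpE2: assumes x: "x \<in> H" shows "fp E2 x * fp E2 x = 1"
  using sh_a[OF x] unfolding fp_def E2_def by (cases "R x \<in> sh") auto

lemma kernel: assumes n: "null p"
  shows "\<exists>u t. \<forall>r\<in>F. K dvd (p r - (u * E1 r + t * E2 r))"
proof -
  obtain h0 where h0: "h0 \<in> H" using Hne by blast
  define c0 where "c0 = fp p h0 * fp E2 h0"
  define p' where "p' = (\<lambda>r. p r - c0 * E2 r)"
  have n': "null p'" unfolding null_iff
  proof
    fix x assume x: "x \<in> H"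
    have "S p' x = S p x - c0 * S E2 x" unfolding p'_def S_def by (simp add: sum_subtractf sum_distrib_left)
    then show "K dvd S p' x" using n null_iff E2_null x by auto
  qed
  have f0: "fp p' h0 = 0"
  proof -
    have "fp p' h0 = fp p h0 - c0 * fp E2 h0" unfolding p'_def fp_def by (simp add: algebra_simps)
    also have "\<dots> = fp p h0 - fp p h0 * (fp E2 h0 * fp E2 h0)" unfolding c0_def by (simp add: mult_ac)
    finally show ?thesis using fpE2[OF h0] by simp
  qed
  have fz: "K dvd fp p' y" if y: "y \<in> H" for y
  proof -
    from H_two_orbs[OF h0 y] show ?thesis
    proof
      assume "y \<in> orb g h0"
      then obtain m where "y = (g^^m) h0" unfolding orb_def by auto
      then show ?thesis using fp_gn[OF h0 n', of m] f0 by simp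
    next
      assume "y \<in> orb g (\<alpha> h0)"
      then obtain m where "y = (g^^m) (\<alpha> h0)" unfolding orb_def by auto
      then show ?thesis using fp_gn[OF aH[OF h0] n', of m] f0 fp_a[OF h0] by simp
    qed
  qed
  define q where "q x = E1 (R x) * p' (R x)" for x
  have qa: "K dvd (q (\<alpha> x) - q x)" if x: "x \<in> H" for x
  proof -
    have "E1 (R (\<alpha> x)) = - E1 (R x)" using sh_a[OF x] unfolding E1_def by auto
    then have "q (\<alpha> x) - q x = - E1 (R x) * fp p' x" unfolding q_def fp_def by (simp add: algebra_simps)
    then show ?thesis using fz[OF x] by simp
  qed
  have qs: "K dvd (q (\<sigma> x) - q x)" if x: "x \<in> H" for x
    using qa[OF x] R_s[OF x] unfolding q_def by simp
  have qc: "K dvd (q y - q h0)" if y: "y \<in> H" for y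
  proof -
    have "(h0, y) \<in> {(x, y). x \<in> H \<and> (y = \<sigma> x \<or> y = \<alpha> x)}\<^sup>*"
      using conn h0 y unfolding map_connected_def by blast
    then show ?thesis
    proof (induction rule: rtrancl_induct)
      case base then show ?case by simp
    next
      case (step y z)
      then have yz: "y \<in> H" "z = \<sigma> y \<or> z = \<alpha> y" by auto
      have "K dvd (q z - q y)" using yz qa qs by auto
      then have "K dvd ((q z - q y) + (q y - q h0))" using step.IH by (rule dvd_add)
      then show ?case by simp
    qed
  qed
  have "\<forall>r\<in>F. K dvd (p r - (q h0 * E1 r + c0 * E2 r))"
  proof
    fix r assume r: "r \<in> F"
    then obtain y where y: "y \<in> H" "r = R y" using F_eq by auto
    have "p r - (q h0 * E1 r + c0 * E2 r) = E1 r * (q y - q h0)"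
      unfolding q_def p'_def using y E1sq[of r] by (simp add: algebra_simps)
    then show "K dvd (p r - (q h0 * E1 r + c0 * E2 r))" using qc[OF y(1)] by simp
  qed
  then show ?thesis by blast
qed

end


lemma card_vecs: assumes A: "finite A" and k: "0 < k" shows "card (vecs k A) = k ^ card A"
proof -
  have inj: "inj_on (\<lambda>p. restrict p A) (vecs k A)"
  proof (rule inj_onI)
    fix p q assume p: "p \<in> vecs k A" and q: "q \<in> vecs k A" and e: "restrict p A = restrict q A"
    show "p = q"
    proof
      fix x show "p x = q x"
        using p q fun_cong[OF e, of x] unfolding vecs_def by (cases "x \<in> A") auto
    qed
  qed
  have im: "(\<lambda>p. restrict p A) ` vecs k A = PiE A (\<lambda>_. {0..<int k})"
  proof (intro subset_antisym subsetI)
    fix f assume "f \<in> (\<lambda>p. restrict p A) ` vecs k A"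
    then show "f \<in> PiE A (\<lambda>_. {0..<int k})" using k unfolding vecs_def by auto
  next
    fix f assume f: "f \<in> PiE A (\<lambda>_. {0..<int k})"
    define p where "p x = (if x \<in> A then f x else 0)" for x
    have "p \<in> vecs k A" using f k unfolding vecs_def p_def by auto
    moreover have "restrict p A = f" using f unfolding p_def by (auto simp: restrict_def PiE_def extensional_def)
    ultimately show "f \<in> (\<lambda>p. restrict p A) ` vecs k A" by force
  qed
  have "card (vecs k A) = card (PiE A (\<lambda>_. {0..<int k}))" using card_image[OF inj] im by simp
  also have "\<dots> = k ^ card A" using A by (simp add: card_PiE)
  finally show ?thesis .
qed

lemma finite_vecs: assumes A: "finite A" and k: "0 < k" shows "finite (vecs k A)"
  using card_vecs[OF A k] k card.infinite by fastforce

lemma vecs_diff: assumes "S \<subseteq> A" "0 < k"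
  shows "{p \<in> vecs k A. \<forall>r\<in>S. p r = 0} = vecs k (A - S)"
  using assms unfolding vecs_def by auto

lemma range_eq: fixes x y K :: int assumes "0 \<le> x" "x < K" "0 \<le> y" "y < K" "K dvd (x - y)" shows "x = y"
proof -
  have "x mod K = y mod K" using assms(5) by (simp add: mod_eq_dvd_iff)
  then show ?thesis using assms by simp
qed

lemma card_fibers: assumes "finite A" "\<And>y. y \<in> f ` A \<Longrightarrow> card {x\<in>A. f x = y} = m"
  shows "card A = card (f ` A) * m"
proof -
  have "A = (\<Union>y\<in>f ` A. {x\<in>A. f x = y})" by auto
  then have "card A = card (\<Union>y\<in>f ` A. {x\<in>A. f x = y})" by simp
  also have "\<dots> = (\<Sum>y\<in>f ` A. card {x\<in>A. f x = y})"
    using assms(1) by (intro card_UN_disjoint) auto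
  also have "\<dots> = (\<Sum>y\<in>f ` A. m)" using assms(2) by simp
  finally show ?thesis by simp
qed

context kd begin

definition phi :: "('d set \<Rightarrow> int) \<Rightarrow> 'd set \<Rightarrow> int" where
  "phi p = (\<lambda>v. if v \<in> VS then (- L p v) mod K else 0)"

lemma L_diff: "L (\<lambda>r. p r - q r) v = L p v - L q v"
  unfolding L_def game_mult_def by (simp add: sum_subtractf[symmetric] right_diff_distrib if_distrib cong: if_cong)

lemma L_add: "L (\<lambda>r. p r + q r) v = L p v + L q v"
  unfolding L_def game_mult_def by (simp add: sum.distrib[symmetric] distrib_left if_distrib cong: if_cong)

lemma L_cong: assumes "\<forall>r\<in>F. K dvd (p r - q r)" shows "K dvd (L p v - L q v)"
proof -
  have "L p v - L q v = (\<Sum>r\<in>F. if incident v r then a v r * (p r - q r) else 0)"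
    unfolding L_def game_mult_def by (simp add: sum_subtractf[symmetric] right_diff_distrib if_distrib cong: if_cong)
  also have "K dvd \<dots>" using assms by (intro dvd_sum) auto
  finally show ?thesis .
qed

lemma S_cong: assumes "\<forall>r\<in>F. K dvd (p r - q r)" "x \<in> H" shows "K dvd (S p x - S q x)"
proof -
  have "S p x - S q x = (\<Sum>y\<in>V x. p (R y) - q (R y))" unfolding S_def by (simp add: sum_subtractf)
  also have "K dvd \<dots>" using assms R_in V_sub by (intro dvd_sum) blast
  finally show ?thesis .
qed

lemma mod_cong: "K dvd (x mod K - x)"
  by (metis dvd_minus_iff minus_diff_eq mod_eq_dvd_iff mod_mod_trivial)

lemma phi_eq_iff: "phi p = phi q \<longleftrightarrow> null (\<lambda>r. p r - q r)"
proof -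
  have "phi p = phi q \<longleftrightarrow> (\<forall>v\<in>VS. (- L p v) mod K = (- L q v) mod K)"
    unfolding phi_def by (auto simp: fun_eq_iff)
  also have "\<dots> \<longleftrightarrow> (\<forall>v\<in>VS. K dvd (L p v - L q v))"
    by (simp add: mod_eq_dvd_iff) (metis dvd_minus_iff minus_diff_eq)
  also have "\<dots> \<longleftrightarrow> null (\<lambda>r. p r - q r)" unfolding null_def L_diff ..
  finally show ?thesis .
qed


lemma orb_alpha: assumes h: "h \<in> H" shows "orb \<alpha> h = {h, \<alpha> h}"
proof -
  have "(\<alpha>^^n) h \<in> {h, \<alpha> h}" for n
  proof (induction n)
    case 0 then show ?case by simp
  next
    case (Suc n) then show ?case using aa[OF h] by auto
  qed
  moreover have "h \<in> orb \<alpha> h" "\<alpha> h \<in> orb \<alpha> h" using orb_self orb_funpow[where n=1 and f=\<alpha>] by auto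
  ultimately show ?thesis unfolding orb_def by auto
qed

lemma cardF: "card F = card VS + 2"
proof -
  have 1: "card H = 4 * card VS" unfolding verts_def using card_partition_orb[OF sp fin c4] .
  have "card (orb \<alpha> h) = 2" if "h \<in> H" for h using orb_alpha[OF that] anf[OF that] by simp
  then have 2: "card H = 2 * card (edges H \<alpha>)" unfolding edges_def using card_partition_orb[OF ap fin] by blast
  show ?thesis using eul 1 2 by linarith
qed

lemma shex: "\<exists>r0 r1. r0 \<in> F \<and> r0 \<in> sh \<and> r1 \<in> F \<and> r1 \<notin> sh \<and> E2 r1 * E2 r1 = 1"
proof -
  obtain h where h: "h \<in> H" using Hne by blast
  show ?thesis
  proof (cases "R h \<in> sh")
    case True
    then show ?thesis using sh_a[OF h] R_in h aH unfolding E2_def by (intro exI[of _ "R h"] exI[of _ "R (\<alpha> h)"]) auto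
  next
    case False
    then show ?thesis using sh_a[OF h] R_in h aH unfolding E2_def by (intro exI[of _ "R (\<alpha> h)"] exI[of _ "R h"]) auto
  qed
qed

lemma sh_sub: "sh \<subseteq> F" using cb unfolding checkerboard_def by blast

lemma a_one: assumes k0: "k = 0" and v: "v \<in> VS" and r: "r \<in> F" and inc: "incident v r" shows "a v r = 1"
proof -
  obtain x where x: "x \<in> H" "v = V x" using v VS_eq by auto
  have "r \<in> R ` V x" using inc_eq[OF x(1)] r inc x by auto
  then obtain y where y: "y \<in> V x" "r = R y" by auto
  have "card (v \<inter> r) = 1" using VR_one[OF x(1) y(1)] x y by simp
  then show ?thesis using ver v r inc k0 unfolding game_version_def by auto
qed

lemma ver_m: assumes k0: "k = 0" shows "game_version H \<sigma> \<alpha> m a"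
  unfolding game_version_def using a_one[OF k0] by auto

lemma uniq0: assumes k0: "k = 0" and r: "r \<in> sh" and r': "r' \<in> F" "r' \<notin> sh"
  and p: "p \<in> vecs k F" "p r = 0" "p r' = 0" "solving H \<sigma> \<alpha> k a c p"
  and q: "q \<in> vecs k F" "q r = 0" "q r' = 0" "solving H \<sigma> \<alpha> k a c q"
  shows "p = q"
proof -
  have "null (\<lambda>r. p r - q r)" unfolding null_def
  proof
    fix v assume v: "v \<in> VS"
    have "L p v + c v = 0" "L q v + c v = 0" using p(4) q(4) v k0 unfolding solving_def L_def by auto
    then have "L p v - L q v = 0" by linarith
    then show "K dvd L (\<lambda>r. p r - q r) v" unfolding L_diff by simp
  qed
  from kernel[OF this] obtain u t where ut: "\<forall>r\<in>F. K dvd (p r - q r - (u * E1 r + t * E2 r))" by blast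
  then have ut0: "\<forall>r\<in>F. p r - q r = u * E1 r + t * E2 r" using k0 by simp
  have rF: "r \<in> F" using r sh_sub by blast
  have u0: "u = 0" using ut0 rF r p q unfolding E1_def E2_def by auto
  have "t * E2 r' = 0" using ut0 r' p q u0 by auto
  moreover have "E2 r' \<noteq> 0" using r' unfolding E2_def by auto
  ultimately have t0: "t = 0" by simp
  show ?thesis
  proof
    fix x show "p x = q x"
    proof (cases "x \<in> F")
      case True then show ?thesis using ut0 u0 t0 by auto
    next
      case False then show ?thesis using p(1) q(1) unfolding vecs_def by auto
    qed
  qed
qed

lemma gm_sum: fixes n :: nat assumes F': "F' \<subseteq> F" and bf: "bij_betw bf {0..<n} F'" and p0: "\<And>r. r \<in> F - F' \<Longrightarrow> p r = 0"
  shows "game_mult H \<sigma> \<alpha> a p v = (\<Sum>j<n. (if incident v (bf j) then a v (bf j) else 0) * p (bf j))"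
proof -
  have "game_mult H \<sigma> \<alpha> a p v = (\<Sum>r\<in>F'. if incident v r then a v r * p r else 0)"
    unfolding game_mult_def using F' p0 finF by (intro sum.mono_neutral_right) auto
  also have "\<dots> = (\<Sum>j\<in>{0..<n}. if incident v (bf j) then a v (bf j) * p (bf j) else 0)"
    using sum.reindex_bij_betw[OF bf, of "\<lambda>r. if incident v r then a v r * p r else 0"] by simp
  also have "\<dots> = (\<Sum>j<n. (if incident v (bf j) then a v (bf j) else 0) * p (bf j))"
    by (intro sum.cong) (auto simp: atLeast0LessThan)
  finally show ?thesis .
qed

context assumes kpos: "0 < k" begin

lemma phi_vecs: "phi p \<in> vecs k VS"
  unfolding vecs_def phi_def using kpos by auto

lemma solving_iff: assumes c: "c \<in> vecs k VS" shows "solving H \<sigma> \<alpha> k a c p \<longleftrightarrow> phi p = c"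
proof -
  have cv: "0 \<le> c v \<and> c v < K" if "v \<in> VS" for v using c that kpos unfolding vecs_def by auto
  have c0: "c v = 0" if "v \<notin> VS" for v using c that unfolding vecs_def by auto
  have "(game_mult H \<sigma> \<alpha> a p v + c v) mod K = 0 \<longleftrightarrow> (- L p v) mod K = c v" if v: "v \<in> VS" for v
  proof -
    have "c v mod K = c v" using cv[OF v] by simp
    then have "(- L p v) mod K = c v \<longleftrightarrow> (- L p v) mod K = c v mod K" by simp
    also have "\<dots> \<longleftrightarrow> K dvd (L p v + c v)"
      by (simp add: mod_eq_dvd_iff) (metis add.commute diff_minus_eq_add dvd_minus_iff minus_diff_eq)
    finally show ?thesis unfolding L_def by (simp add: dvd_eq_mod_eq_0)
  qed
  then show ?thesis unfolding solving_def phi_def using c0 by (auto simp: fun_eq_iff)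
qed

definition VSS :: "'d set set \<Rightarrow> ('d set \<Rightarrow> int) set" where
  "VSS T = {p \<in> vecs k F. \<forall>r\<in>T. p r = 0}"

definition kills :: "'d set set \<Rightarrow> bool" where
  "kills T \<longleftrightarrow> (\<forall>u t. (\<forall>r\<in>T. K dvd (u * E1 r + t * E2 r)) \<longrightarrow> (\<forall>r\<in>F. K dvd (u * E1 r + t * E2 r)))"

lemma vecsF: "p \<in> vecs k F \<Longrightarrow> r \<in> F \<Longrightarrow> 0 \<le> p r \<and> p r < K" using kpos unfolding vecs_def by auto
lemma vecsF0: "p \<in> vecs k F \<Longrightarrow> r \<notin> F \<Longrightarrow> p r = 0" unfolding vecs_def by auto

lemma inj_phi: assumes kl: "kills T" and TF: "T \<subseteq> F" shows "inj_on phi (VSS T)"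
proof (rule inj_onI)
  fix p q assume p: "p \<in> VSS T" and q: "q \<in> VSS T" and e: "phi p = phi q"
  then have "null (\<lambda>r. p r - q r)" using phi_eq_iff by blast
  from kernel[OF this] obtain u t where ut: "\<forall>r\<in>F. K dvd (p r - q r - (u * E1 r + t * E2 r))" by blast
  have "\<forall>r\<in>T. K dvd (u * E1 r + t * E2 r)"
  proof
    fix r assume r: "r \<in> T"
    then have "p r = 0" "q r = 0" using p q unfolding VSS_def by auto
    moreover have "r \<in> F" using TF r by blast
    ultimately show "K dvd (u * E1 r + t * E2 r)" using ut by (metis diff_0 diff_self dvd_minus_iff)
  qed
  then have all: "\<forall>r\<in>F. K dvd (u * E1 r + t * E2 r)" using kl unfolding kills_def by blast
  show "p = q"
  proof
    fix r show "p r = q r"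
    proof (cases "r \<in> F")
      case True
      have "K dvd (p r - q r)" using ut all True by (metis diff_add_cancel dvd_add)
      then show ?thesis using range_eq vecsF p q True unfolding VSS_def by blast
    next
      case False
      have "p \<in> vecs k F" "q \<in> vecs k F" using p q unfolding VSS_def by auto
      then show ?thesis using vecsF0 False by metis
    qed
  qed
qed


lemma VSS_eq: "T \<subseteq> F \<Longrightarrow> VSS T = vecs k (F - T)" unfolding VSS_def by (rule vecs_diff[OF _ kpos])

lemma card_VSS: assumes TF: "T \<subseteq> F" shows "card (VSS T) = k ^ (card F - card T)"
proof -
  have fT: "finite T" using finF TF by (rule finite_subset[rotated])
  have "card (vecs k (F - T)) = k ^ card (F - T)" using finF kpos by (intro card_vecs) auto
  then show ?thesis using VSS_eq[OF TF] card_Diff_subset[OF fT TF] by simp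
qed

lemma fin_VSS: "T \<subseteq> F \<Longrightarrow> finite (VSS T)"
  using VSS_eq finite_vecs[OF _ kpos] finF by (metis finite_Diff)

lemma uniq_exist: assumes TF: "T \<subseteq> F" and c2: "card T = 2" and kl: "kills T"
  and c: "c \<in> vecs k VS"
  shows "\<exists>!p. p \<in> vecs k F \<and> (\<forall>r\<in>T. p r = 0) \<and> solving H \<sigma> \<alpha> k a c p"
proof -
  have inj: "inj_on phi (VSS T)" using inj_phi[OF kl TF] .
  have "card (phi ` VSS T) = card (vecs k VS)"
    using card_image[OF inj] card_VSS[OF TF] c2 cardF card_vecs[OF finVS kpos] by simp
  moreover have "phi ` VSS T \<subseteq> vecs k VS" using phi_vecs by auto
  moreover have "finite (vecs k VS)" using finite_vecs[OF finVS kpos] .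
  ultimately have eq: "phi ` VSS T = vecs k VS" using card_subset_eq by blast
  then obtain p where p: "p \<in> VSS T" "phi p = c" using c by (metis imageE)
  show ?thesis
  proof (rule ex1I[of _ p])
    show "p \<in> vecs k F \<and> (\<forall>r\<in>T. p r = 0) \<and> solving H \<sigma> \<alpha> k a c p"
      using p solving_iff[OF c] unfolding VSS_def by auto
  next
    fix q assume q: "q \<in> vecs k F \<and> (\<forall>r\<in>T. q r = 0) \<and> solving H \<sigma> \<alpha> k a c q"
    then have "q \<in> VSS T" "phi q = c" using solving_iff[OF c] unfolding VSS_def by auto
    then show "q = p" using inj p unfolding inj_on_def by metis
  qed
qed

definition Z :: "'d set set \<Rightarrow> ('d set \<Rightarrow> int) set" where "Z T = {p \<in> VSS T. null p}"

lemma fiber_card: assumes TF: "T \<subseteq> F" and p0: "p0 \<in> VSS T"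
  shows "card {p \<in> VSS T. phi p = phi p0} = card (Z T)"
proof -
  define sf where "sf z = (\<lambda>r. (z r + p0 r) mod K)" for z
  have p0v: "p0 \<in> vecs k F" "\<forall>r\<in>T. p0 r = 0" using p0 unfolding VSS_def by auto
  have inj: "inj_on sf (Z T)"
  proof (rule inj_onI)
    fix z1 z2 assume z1: "z1 \<in> Z T" and z2: "z2 \<in> Z T" and e: "sf z1 = sf z2"
    have v: "z1 \<in> vecs k F" "z2 \<in> vecs k F" using z1 z2 unfolding Z_def VSS_def by auto
    show "z1 = z2"
    proof
      fix r
      have "(z1 r + p0 r) mod K = (z2 r + p0 r) mod K" using fun_cong[OF e, of r] unfolding sf_def .
      then have d: "K dvd (z1 r - z2 r)" by (simp add: mod_eq_dvd_iff)
      show "z1 r = z2 r"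
      proof (cases "r \<in> F")
        case True
        have "0 \<le> z1 r \<and> z1 r < K" "0 \<le> z2 r \<and> z2 r < K" using vecsF v True by auto
        then show ?thesis using range_eq[of "z1 r" K "z2 r"] d by auto
      next
        case False then show ?thesis using vecsF0 v by metis
      qed
    qed
  qed
  have im: "sf ` Z T = {p \<in> VSS T. phi p = phi p0}"
  proof (intro subset_antisym subsetI)
    fix p assume "p \<in> sf ` Z T"
    then obtain z where z: "z \<in> Z T" "p = sf z" by auto
    have zv: "z \<in> vecs k F" "\<forall>r\<in>T. z r = 0" "null z" using z unfolding Z_def VSS_def by auto
    have "p \<in> vecs k F" using z(2) zv p0v kpos unfolding vecs_def sf_def by auto
    moreover have "\<forall>r\<in>T. p r = 0" using z(2) zv p0v unfolding sf_def by auto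
    moreover have "null (\<lambda>r. p r - p0 r)" unfolding null_def
    proof
      fix v assume v: "v \<in> VS"
      have "K dvd (L p v - L (\<lambda>r. z r + p0 r) v)" unfolding z(2) sf_def using mod_cong by (intro L_cong) auto
      moreover have "L (\<lambda>r. z r + p0 r) v = L z v + L p0 v" by (rule L_add)
      moreover have "K dvd L z v" using zv(3) v unfolding null_def by blast
      ultimately have "K dvd ((L p v - L (\<lambda>r. z r + p0 r) v) + L z v)" by (intro dvd_add) auto
      moreover have "(L p v - L (\<lambda>r. z r + p0 r) v) + L z v = L p v - L p0 v" using L_add[of z p0 v] by simp
      ultimately have "K dvd (L p v - L p0 v)" by simp
      then show "K dvd L (\<lambda>r. p r - p0 r) v" by (simp add: L_diff)
    qed
    ultimately show "p \<in> {p \<in> VSS T. phi p = phi p0}" unfolding VSS_def using phi_eq_iff by auto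
  next
    fix p assume p: "p \<in> {p \<in> VSS T. phi p = phi p0}"
    have pv: "p \<in> vecs k F" "\<forall>r\<in>T. p r = 0" "null (\<lambda>r. p r - p0 r)"
      using p phi_eq_iff unfolding VSS_def by auto
    define z where "z = (\<lambda>r. (p r - p0 r) mod K)"
    have "z \<in> vecs k F" using pv p0v kpos unfolding vecs_def z_def by auto
    moreover have "\<forall>r\<in>T. z r = 0" using pv p0v unfolding z_def by auto
    moreover have "null z" unfolding null_def
    proof
      fix v assume v: "v \<in> VS"
      have "K dvd (L z v - L (\<lambda>r. p r - p0 r) v)" unfolding z_def using mod_cong by (intro L_cong) auto
      moreover have "K dvd L (\<lambda>r. p r - p0 r) v" using pv(3) v unfolding null_def by blast
      ultimately have "K dvd ((L z v - L (\<lambda>r. p r - p0 r) v) + L (\<lambda>r. p r - p0 r) v)" by (intro dvd_add)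
      then show "K dvd L z v" by simp
    qed
    ultimately have zZ: "z \<in> Z T" unfolding Z_def VSS_def by auto
    have "sf z = p"
    proof
      fix r
      have "sf z r = p r mod K" unfolding sf_def z_def by (simp add: mod_add_left_eq)
      also have "\<dots> = p r"
      proof (cases "r \<in> F")
        case True then show ?thesis using vecsF[OF pv(1) True] by simp
      next
        case False then show ?thesis using vecsF0[OF pv(1) False] by simp
      qed
      finally show "sf z r = p r" .
    qed
    then show "p \<in> sf ` Z T" using zZ by force
  qed
  show ?thesis using card_image[OF inj] im by simp
qed

lemma count1: assumes TF: "T \<subseteq> F"
  shows "card (VSS T) = card (phi ` VSS T) * card (Z T)"
proof (rule card_fibers[OF fin_VSS[OF TF]])
  fix y assume "y \<in> phi ` VSS T"
  then obtain p0 where "p0 \<in> VSS T" "y = phi p0" by auto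
  then show "card {x \<in> VSS T. phi x = y} = card (Z T)" using fiber_card[OF TF] by simp
qed

lemma num_eq: assumes TF: "T \<subseteq> F" shows "num_solvable_avoiding H \<sigma> \<alpha> k a T = card (phi ` VSS T)"
proof -
  have "{c \<in> vecs k VS. \<exists>p\<in>vecs k F. (\<forall>r\<in>T. p r = 0) \<and> solving H \<sigma> \<alpha> k a c p} = phi ` VSS T"
  proof (intro subset_antisym subsetI)
    fix c assume "c \<in> {c \<in> vecs k VS. \<exists>p\<in>vecs k F. (\<forall>r\<in>T. p r = 0) \<and> solving H \<sigma> \<alpha> k a c p}"
    then obtain p where c: "c \<in> vecs k VS" and p: "p \<in> vecs k F" "\<forall>r\<in>T. p r = 0" "solving H \<sigma> \<alpha> k a c p" by auto
    then have "phi p = c" using solving_iff by blast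
    then show "c \<in> phi ` VSS T" using p unfolding VSS_def by auto
  next
    fix c assume "c \<in> phi ` VSS T"
    then obtain p where p: "p \<in> VSS T" "c = phi p" by auto
    then have "solving H \<sigma> \<alpha> k a c p" using solving_iff phi_vecs by blast
    then show "c \<in> {c \<in> vecs k VS. \<exists>p\<in>vecs k F. (\<forall>r\<in>T. p r = 0) \<and> solving H \<sigma> \<alpha> k a c p}"
      using p phi_vecs unfolding VSS_def by auto
  qed
  then show ?thesis unfolding num_solvable_avoiding_def by simp
qed

definition TT :: "'d set set \<Rightarrow> (int \<times> int) set" where
  "TT T = {(u,t). 0 \<le> u \<and> u < K \<and> 0 \<le> t \<and> t < K \<and> (\<forall>r\<in>T. K dvd (u * E1 r + t * E2 r))}"

lemma card_Z: assumes TF: "T \<subseteq> F" shows "card (Z T) = card (TT T)"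
proof -
  define psi where "psi = (\<lambda>(u,t). \<lambda>r. if r \<in> F then (u * E1 r + t * E2 r) mod K else 0)"
  obtain r0 r1 where rr: "r0 \<in> F" "r0 \<in> sh" "r1 \<in> F" "r1 \<notin> sh" "E2 r1 * E2 r1 = 1" using shex by blast
  have inj: "inj_on psi (TT T)"
  proof (rule inj_onI)
    fix x y assume x: "x \<in> TT T" and y: "y \<in> TT T" and e: "psi x = psi y"
    obtain u t where ut: "x = (u,t)" by force
    obtain u' t' where ut': "y = (u',t')" by force
    have rg: "0 \<le> u" "u < K" "0 \<le> t" "t < K" "0 \<le> u'" "u' < K" "0 \<le> t'" "t' < K"
      using x y ut ut' unfolding TT_def by auto
    have "u mod K = u' mod K" using fun_cong[OF e, of r0] rr ut ut' unfolding psi_def E1_def E2_def by simp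
    then have uu: "u = u'" using rg by simp
    have "(u * E1 r1 + t * E2 r1) mod K = (u * E1 r1 + t' * E2 r1) mod K"
      using fun_cong[OF e, of r1] rr ut ut' uu unfolding psi_def by simp
    then have "K dvd ((t - t') * E2 r1)" by (simp add: mod_eq_dvd_iff algebra_simps)
    then have "K dvd ((t - t') * E2 r1 * E2 r1)" by simp
    then have "K dvd (t - t')" using rr(5) by (simp add: mult.assoc)
    then have "t = t'" using range_eq rg by blast
    then show "x = y" using ut ut' uu by simp
  qed
  have im: "psi ` TT T = Z T"
  proof (intro subset_antisym subsetI)
    fix p assume "p \<in> psi ` TT T"
    then obtain u t where ut: "(u,t) \<in> TT T" "p = psi (u,t)" by force
    have "p \<in> vecs k F" using ut kpos unfolding psi_def vecs_def by auto
    moreover have "\<forall>r\<in>T. p r = 0" using ut TF unfolding psi_def TT_def by (auto simp: dvd_eq_mod_eq_0)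
    moreover have "null p" unfolding null_iff
    proof
      fix x assume x: "x \<in> H"
      have "K dvd (S p x - S (\<lambda>r. u * E1 r + t * E2 r) x)"
        using ut mod_cong unfolding psi_def by (intro S_cong[OF _ x]) auto
      moreover have "S (\<lambda>r. u * E1 r + t * E2 r) x = 0" using S_lin E1_null[OF x] E2_null[OF x] by simp
      ultimately show "K dvd S p x" by simp
    qed
    ultimately show "p \<in> Z T" unfolding Z_def VSS_def by auto
  next
    fix p assume p: "p \<in> Z T"
    have pv: "p \<in> vecs k F" "\<forall>r\<in>T. p r = 0" "null p" using p unfolding Z_def VSS_def by auto
    obtain u t where ut: "\<forall>r\<in>F. K dvd (p r - (u * E1 r + t * E2 r))" using kernel[OF pv(3)] by blast
    define u' where "u' = u mod K"
    define t' where "t' = t mod K"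
    have cg: "K dvd (p r - (u' * E1 r + t' * E2 r))" if r: "r \<in> F" for r
    proof -
      have "K dvd ((u' - u) * E1 r + (t' - t) * E2 r)"
        unfolding u'_def t'_def using mod_cong by (intro dvd_add dvd_mult2) auto
      then have "K dvd ((p r - (u * E1 r + t * E2 r)) - ((u' - u) * E1 r + (t' - t) * E2 r))"
        using ut r by (rule_tac dvd_diff) auto
      then show ?thesis by (simp add: algebra_simps)
    qed
    have "psi (u',t') = p"
    proof
      fix r show "psi (u',t') r = p r"
      proof (cases "r \<in> F")
        case True
        have "(u' * E1 r + t' * E2 r) mod K = p r mod K" using cg[OF True]
          by (simp add: mod_eq_dvd_iff) (metis dvd_minus_iff minus_diff_eq)
        then show ?thesis using True vecsF[OF pv(1) True] unfolding psi_def by simp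
      next
        case False then show ?thesis using vecsF0[OF pv(1)] unfolding psi_def by simp
      qed
    qed
    moreover have "(u',t') \<in> TT T"
    proof -
      have "K dvd (u' * E1 r + t' * E2 r)" if r: "r \<in> T" for r
        using cg[of r] r TF pv(2) by (metis diff_0 dvd_minus_iff subsetD)
      then show ?thesis unfolding TT_def u'_def t'_def using kpos by auto
    qed
    ultimately show "p \<in> psi ` TT T" by force
  qed
  show ?thesis using card_image[OF inj] im by simp
qed

lemma count_main: assumes TF: "T \<subseteq> F"
  shows "num_solvable_avoiding H \<sigma> \<alpha> k a T * card (TT T) = k ^ (card VS + 2 - card T)"
  using count1[OF TF] card_Z[OF TF] num_eq[OF TF] card_VSS[OF TF] cardF by simp


lemma kill1: assumes r: "r \<in> sh" and r': "r' \<in> F" "r' \<notin> sh" shows "kills {r, r'}"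
  unfolding kills_def
proof (intro allI impI ballI)
  fix u t r2 assume h: "\<forall>r\<in>{r, r'}. K dvd (u * E1 r + t * E2 r)" and r2: "r2 \<in> F"
  have B: "K dvd u" using h r unfolding E1_def E2_def by auto
  have A: "K dvd (- u + t * E2 r')" using h r' unfolding E1_def by auto
  have "K dvd ((- u + t * E2 r') + u)" using dvd_add[OF A B] .
  then have "K dvd (t * E2 r')" by simp
  then have "K dvd (t * E2 r' * E2 r')" by simp
  moreover have "E2 r' * E2 r' = 1" using r' unfolding E2_def by auto
  ultimately have "K dvd t" by (simp add: mult.assoc)
  then show "K dvd (u * E1 r2 + t * E2 r2)" using B by simp
qed

lemma kill2: assumes ko: "odd k" and r: "r \<in> F" "r \<notin> sh" and r': "r' \<in> F" "r' \<notin> sh" and s: "sg r \<noteq> sg r'"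
  shows "kills {r, r'}"
  unfolding kills_def
proof (intro allI impI ballI)
  fix u t r2 assume h: "\<forall>r\<in>{r, r'}. K dvd (u * E1 r + t * E2 r)" and r2: "r2 \<in> F"
  have A: "K dvd (- u + t)" and B: "K dvd (- u - t)" using h r r' s unfolding E1_def E2_def by (cases "sg r"; auto)+
  have d1: "K dvd ((- u + t) - (- u - t))" "K dvd ((- u + t) + (- u - t))"
    using dvd_diff[OF A B] dvd_add[OF A B] by auto
  have "(- u + t) - (- u - t) = 2 * t" "(- u + t) + (- u - t) = - (2 * u)" by simp_all
  then have d: "K dvd (2 * t)" "K dvd (2 * u)" using d1 by simp_all
  have cop: "coprime K 2" using ko by (simp add: coprime_commute)
  have "K dvd t" "K dvd u" using d cop coprime_dvd_mult_right_iff by blast+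
  then show "K dvd (u * E1 r2 + t * E2 r2)" by simp
qed

lemma TT_a: assumes TF: "T \<subseteq> F" and rs: "rs \<in> T" "rs \<in> sh" and ru: "ru \<in> T" "ru \<notin> sh"
  shows "card (TT T) = 1"
proof -
  have "TT T = {(0,0)}"
  proof (intro subset_antisym subsetI)
    fix x assume x: "x \<in> TT T"
    obtain u t where ut: "x = (u,t)" by force
    have h: "0 \<le> u" "u < K" "0 \<le> t" "t < K" "\<forall>r\<in>T. K dvd (u * E1 r + t * E2 r)" using x ut unfolding TT_def by auto
    have "K dvd u" using h(5) rs unfolding E1_def E2_def by auto
    then have u0: "u = 0" using range_eq[of u K 0] h kpos by simp
    have "K dvd (t * E2 ru)" using h(5) ru u0 by auto
    then have "K dvd (t * E2 ru * E2 ru)" by simp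
    moreover have "E2 ru * E2 ru = 1" using ru unfolding E2_def by auto
    ultimately have "K dvd t" by (simp add: mult.assoc)
    then have "t = 0" using range_eq[of t K 0] h kpos by simp
    then show "x \<in> {(0,0)}" using ut u0 by simp
  next
    fix x assume "x \<in> {(0::int,0::int)}"
    then show "x \<in> TT T" using kpos unfolding TT_def by auto
  qed
  then show ?thesis by simp
qed

lemma TT_b: assumes TF: "T \<subseteq> sh" and ne: "T \<noteq> {}" shows "card (TT T) = k"
proof -
  have "TT T = {0} \<times> {0..<K}"
  proof (intro subset_antisym subsetI)
    fix x assume x: "x \<in> TT T"
    obtain u t where ut: "x = (u,t)" by force
    obtain r where r: "r \<in> T" using ne by blast
    have h: "0 \<le> u" "u < K" "0 \<le> t" "t < K" "\<forall>r\<in>T. K dvd (u * E1 r + t * E2 r)" using x ut unfolding TT_def by auto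
    have "K dvd (u * E1 r + t * E2 r)" using h(5) r by blast
    moreover have "E1 r = 1" "E2 r = 0" using r TF unfolding E1_def E2_def by auto
    ultimately have "K dvd u" by simp
    then have u0: "u = 0" using range_eq[of u K 0] h kpos by simp
    then show "x \<in> {0} \<times> {0..<K}" using ut h by simp
  next
    fix x assume "x \<in> {0::int} \<times> {0..<K}"
    then show "x \<in> TT T" using TF unfolding TT_def E1_def E2_def by auto
  qed
  then show ?thesis by simp
qed

lemma TT_c: assumes TF: "T \<subseteq> F" and ns: "T \<inter> sh = {}" and ne: "T \<noteq> {}"
  and same: "\<forall>r\<in>T. \<forall>r'\<in>T. sg r = sg r'" shows "card (TT T) = k"
proof -
  obtain r1 where r1: "r1 \<in> T" using ne by blast
  define e where "e = E2 r1"
  have r1n: "r1 \<notin> sh" using r1 ns by blast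
  have eT: "E2 r = e" "E1 r = -1" if rT: "r \<in> T" for r
  proof -
    have "r \<notin> sh" "sg r = sg r1" using rT ns same r1 by blast+
    then show "E2 r = e" "E1 r = -1" using r1n unfolding e_def E2_def E1_def by auto
  qed
  have ee: "e * e = 1" using r1n unfolding e_def E2_def by auto
  have "TT T = (\<lambda>u. (u, (e * u) mod K)) ` {0..<K}"
  proof (intro subset_antisym subsetI)
    fix x assume x: "x \<in> TT T"
    obtain u t where ut: "x = (u,t)" by force
    have h: "0 \<le> u" "u < K" "0 \<le> t" "t < K" "\<forall>r\<in>T. K dvd (u * E1 r + t * E2 r)" using x ut unfolding TT_def by auto
    have "K dvd (u * E1 r1 + t * E2 r1)" using h(5) r1 by blast
    then have "K dvd (- u + t * e)" using eT[OF r1] by simp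
    then have "K dvd ((- u + t * e) * e)" by simp
    moreover have "(- u + t * e) * e = t * (e * e) - e * u" by (simp add: algebra_simps)
    ultimately have "K dvd (t - e * u)" using ee by simp
    then have "t mod K = (e * u) mod K" by (simp add: mod_eq_dvd_iff)
    then have "t = (e * u) mod K" using h by simp
    then show "x \<in> (\<lambda>u. (u, (e * u) mod K)) ` {0..<K}" using ut h by auto
  next
    fix x assume "x \<in> (\<lambda>u. (u, (e * u) mod K)) ` {0..<K}"
    then obtain u where u: "0 \<le> u" "u < K" "x = (u, (e * u) mod K)" by auto
    have "K dvd (u * E1 r + (e * u) mod K * E2 r)" if r: "r \<in> T" for r
    proof -
      have "K dvd ((e * u) mod K - e * u)" using mod_cong .
      then have "K dvd (((e * u) mod K - e * u) * e)" by simp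
      moreover have "((e * u) mod K - e * u) * e = (e * u) mod K * e - u * (e * e)"
        by (simp add: algebra_simps)
      moreover have "u * E1 r + (e * u) mod K * E2 r = (e * u) mod K * e - u"
        using eT[OF r] by simp
      ultimately show ?thesis using ee by simp
    qed
    then show "x \<in> TT T" using u kpos unfolding TT_def by auto
  qed
  moreover have "inj_on (\<lambda>u. (u, (e * u) mod K)) {0..<K}" by (rule inj_onI) simp
  ultimately have "card (TT T) = card {0..<K}" by (simp add: card_image)
  then show ?thesis by simp
qed

lemma TT_d: assumes TF: "T \<subseteq> F" and ns: "T \<inter> sh = {}"
  and mix: "\<exists>r\<in>T. \<exists>r'\<in>T. sg r \<noteq> sg r'"
  shows "(odd k \<longrightarrow> card (TT T) = 1) \<and> (even k \<longrightarrow> card (TT T) = 2)"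
proof -
  obtain rp rm where rp: "rp \<in> T" "sg rp" and rm: "rm \<in> T" "\<not> sg rm" using mix by blast
  have eT: "E1 r = -1" "E2 r = 1 \<or> E2 r = -1" if "r \<in> T" for r using that ns unfolding E1_def E2_def by auto
  define DD where "DD = {t. 0 \<le> t \<and> t < K \<and> K dvd (2 * t)}"
  have "TT T = (\<lambda>t. (t,t)) ` DD"
  proof (intro subset_antisym subsetI)
    fix x assume x: "x \<in> TT T"
    obtain u t where ut: "x = (u,t)" by force
    have h: "0 \<le> u" "u < K" "0 \<le> t" "t < K" "\<forall>r\<in>T. K dvd (u * E1 r + t * E2 r)" using x ut unfolding TT_def by auto
    have "K dvd (u * E1 rp + t * E2 rp)" "K dvd (u * E1 rm + t * E2 rm)" using h(5) rp rm by blast+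
    moreover have "E1 rp = -1" "E2 rp = 1" "E1 rm = -1" "E2 rm = -1" using rp rm ns unfolding E1_def E2_def by auto
    ultimately have a1: "K dvd (- u + t)" and a2: "K dvd (- u - t)" by simp_all
    have "K dvd (t - u)" using a1 by simp
    then have tu: "t = u" using range_eq[of t K u] h by simp
    have "K dvd (- (2 * t))" using a2 tu by (simp add: algebra_simps)
    then have "K dvd (2 * t)" by simp
    then show "x \<in> (\<lambda>t. (t,t)) ` DD" using ut tu h unfolding DD_def by auto
  next
    fix x assume "x \<in> (\<lambda>t. (t,t)) ` DD"
    then obtain t where t: "0 \<le> t" "t < K" "K dvd (2 * t)" "x = (t,t)" unfolding DD_def by auto
    have "K dvd (t * E1 r + t * E2 r)" if r: "r \<in> T" for r
    proof -
      have "t * E1 r + t * E2 r = 0 \<or> t * E1 r + t * E2 r = - (2 * t)" using eT[OF r] by auto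
      then show ?thesis using t(3) by auto
    qed
    then show "x \<in> TT T" using t unfolding TT_def by auto
  qed
  moreover have "inj_on (\<lambda>t. (t,t)) DD" by (rule inj_onI) simp
  ultimately have cT: "card (TT T) = card DD" by (simp add: card_image)
  have odd: "DD = {0}" if ko: "odd k"
  proof -
    have cop: "coprime K 2" using ko by (simp add: coprime_commute)
    have "t = 0" if "t \<in> DD" for t
    proof -
      have "K dvd t" using that cop coprime_dvd_mult_right_iff unfolding DD_def by blast
      then show ?thesis using range_eq[of t K 0] that kpos unfolding DD_def by simp
    qed
    moreover have "0 \<in> DD" using kpos unfolding DD_def by simp
    ultimately show ?thesis by blast
  qed
  have even: "card DD = 2" if ke: "even k"
  proof -
    obtain m where m: "k = 2 * m" using ke by blast
    have mpos: "0 < m" using m kpos by simp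
    have "DD = {0, int m}"
    proof (intro subset_antisym subsetI)
      fix t assume t: "t \<in> DD"
      then obtain j where j: "2 * t = K * j" unfolding DD_def by (auto elim: dvdE)
      have t2: "0 \<le> 2 * t" "2 * t < K * 2" using t unfolding DD_def by auto
      have Kp: "0 < K" using kpos by simp
      have "0 \<le> K * j" using t2 j by simp
      then have j0: "0 \<le> j" using Kp by (simp add: zero_le_mult_iff)
      have "K * j < K * 2" using t2 j by simp
      then have j2: "j < 2" using Kp mult_less_cancel_left_pos by blast
      note j0 j2
      then have "j = 0 \<or> j = 1" by auto
      then show "t \<in> {0, int m}" using j m by auto
    next
      fix t assume "t \<in> {0, int m}"
      then show "t \<in> DD" using m mpos unfolding DD_def by auto
    qed
    then show ?thesis using mpos by simp
  qed
  show ?thesis using cT odd even by simp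
qed

end
end


lemma mod_dvd_self: "(m::int) dvd (x mod m - x)"
  by (metis dvd_minus_iff minus_diff_eq mod_eq_dvd_iff mod_mod_trivial)

lemma exist0:
  assumes kd0: "kd H \<sigma> \<alpha> 0 a sh sg"
    and r: "r \<in> sh" and r': "r' \<in> regions H \<sigma> \<alpha>" "r' \<notin> sh"
    and c: "c \<in> vecs 0 (verts H \<sigma>)"
  shows "\<exists>p. p \<in> vecs 0 (regions H \<sigma> \<alpha>) \<and> p r = 0 \<and> p r' = 0 \<and> solving H \<sigma> \<alpha> 0 a c p"
proof -
  interpret kd H \<sigma> \<alpha> 0 a sh sg by (rule kd0)
  define n where "n = card VS"
  define F' where "F' = F - {r, r'}"
  have rF: "r \<in> F" using r sh_sub by blast
  have rr: "r \<noteq> r'" using r r' by blast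
  have cF': "card F' = n" unfolding F'_def n_def using cardF rF r' rr finF
    by (simp add: card_Diff_subset)
  have F'F: "F' \<subseteq> F" unfolding F'_def by blast
  obtain bv where bv: "bij_betw bv {0..<n} VS" using ex_bij_betw_nat_finite[OF finVS] n_def by blast
  obtain bf where bf: "bij_betw bf {0..<n} F'"
    using ex_bij_betw_nat_finite[of F'] finF F'F cF' finite_subset by metis
  define f where "f i j = (if incident (bv i) (bf j) then a (bv i) (bf j) else 0)" for i j
  have gm: "game_mult H \<sigma> \<alpha> a p (bv i) = (\<Sum>j<n. f i j * p (bf j))"
    if "p r = 0" "p r' = 0" for p i
    unfolding f_def using gm_sum[OF F'F bf, of p "bv i"] that unfolding F'_def by auto
  have bvi: "bv i \<in> VS" "inv_into {0..<n} bv (bv i) = i" if "i < n" for i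
    using bv that bij_betw_inv_into_left[OF bv] bij_betwE[OF bv] by auto
  have hyp: "\<exists>x. \<forall>i<n. m dvd ((\<Sum>j<n. f i j * x j) - c' i)" if m: "m \<ge> 2" for m c'
  proof -
    have mp: "0 < nat m" using m by simp
    interpret M: kd H \<sigma> \<alpha> "nat m" a sh sg
      using D red ver_m[OF refl] cb sgn by unfold_locales
    have mm: "int (nat m) = m" using m by simp
    define cc where "cc v = (if v \<in> VS then (- c' (inv_into {0..<n} bv v)) mod m else 0)" for v
    have ccv: "cc \<in> vecs (nat m) VS" unfolding cc_def vecs_def using m mm by auto
    have T: "{r, r'} \<subseteq> F" "card {r, r'} = 2" using rF r' rr by auto
    have kl: "M.kills {r, r'}" using M.kill1[OF mp r r'] .
    obtain p where p: "p \<in> vecs (nat m) F" "\<forall>x\<in>{r,r'}. p x = 0" "solving H \<sigma> \<alpha> (nat m) a cc p"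
      using M.uniq_exist[OF mp T kl ccv] by blast
    have "\<forall>i<n. m dvd ((\<Sum>j<n. f i j * p (bf j)) - c' i)"
    proof (intro allI impI)
      fix i assume i: "i < n"
      have "(game_mult H \<sigma> \<alpha> a p (bv i) + cc (bv i)) mod m = 0"
        using p(3) bvi[OF i] mm unfolding solving_def by auto
      then have "m dvd (game_mult H \<sigma> \<alpha> a p (bv i) + (- c' i) mod m)"
        using bvi[OF i] unfolding cc_def by (simp add: dvd_eq_mod_eq_0)
      moreover have "m dvd ((- c' i) mod m - (- c' i))" by (rule mod_dvd_self)
      ultimately have "m dvd ((game_mult H \<sigma> \<alpha> a p (bv i) + (- c' i) mod m) - ((- c' i) mod m - (- c' i)))"
        by (rule dvd_diff)
      then show "m dvd ((\<Sum>j<n. f i j * p (bf j)) - c' i)" using gm[of p i] p(2) by simp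
    qed
    then show ?thesis by (rule exI[of _ "\<lambda>j. p (bf j)"])
  qed
  have ex: "\<exists>x. \<forall>i<n. (\<Sum>j<n. f i j * x j) = - c (bv i)"
    by (rule int_surj[of n f "\<lambda>i. - c (bv i)"]) (rule hyp)
  then obtain x where x: "\<forall>i<n. (\<Sum>j<n. f i j * x j) = - c (bv i)" by (elim exE)
  define p where "p r0 = (if r0 \<in> F' then x (inv_into {0..<n} bf r0) else 0)" for r0
  have p0: "p r = 0" "p r' = 0" unfolding p_def F'_def by auto
  have pv: "p \<in> vecs 0 F" unfolding vecs_def p_def using F'F by auto
  have pbf: "p (bf j) = x j" if "j < n" for j
    using that bij_betw_inv_into_left[OF bf] bij_betwE[OF bf] unfolding p_def by auto
  have "solving H \<sigma> \<alpha> 0 a c p" unfolding solving_def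
  proof
    fix v assume v: "v \<in> VS"
    define i where "i = inv_into {0..<n} bv v"
    have i: "i < n" "bv i = v" unfolding i_def
      using v bij_betw_inv_into_right[OF bv v] bij_betw_inv_into[OF bv] bij_betwE by fastforce+
    have "game_mult H \<sigma> \<alpha> a p v = (\<Sum>j<n. f i j * x j)"
      using gm[of p i] p0 pbf i by simp
    then show "(game_mult H \<sigma> \<alpha> a p v + c v) mod int 0 = 0" using x i by simp
  qed
  then show ?thesis using pv p0 by blast
qed



theorem mainTheorem16:
  fixes H :: "'d set" and \<sigma> \<alpha> :: "'d \<Rightarrow> 'd" and k :: nat
    and a :: "'d set \<Rightarrow> 'd set \<Rightarrow> int" and sh :: "'d set set" and sg :: "'d set \<Rightarrow> bool"
  assumes D: "knot_diagram H \<sigma> \<alpha>" and red: "reduced H \<sigma> \<alpha>"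
    and k: "k = 0 \<or> 2 \<le> k"
    and ver: "game_version H \<sigma> \<alpha> k a"
    and cb: "checkerboard H \<sigma> \<alpha> sh"
    and sgn: "alternating_signing H \<sigma> \<alpha> sh sg"
  shows
   "(\<forall>r\<in>sh. \<forall>r'\<in>regions H \<sigma> \<alpha> - sh. \<forall>c\<in>vecs k (verts H \<sigma>).
       \<exists>!p. p \<in> vecs k (regions H \<sigma> \<alpha>) \<and> p r = 0 \<and> p r' = 0 \<and> solving H \<sigma> \<alpha> k a c p)
    \<and> ((k \<noteq> 0 \<and> odd k) \<longrightarrow>
       (\<forall>r\<in>regions H \<sigma> \<alpha> - sh. \<forall>r'\<in>regions H \<sigma> \<alpha> - sh. sg r \<noteq> sg r' \<longrightarrow>
         (\<forall>c\<in>vecs k (verts H \<sigma>).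
           \<exists>!p. p \<in> vecs k (regions H \<sigma> \<alpha>) \<and> p r = 0 \<and> p r' = 0 \<and> solving H \<sigma> \<alpha> k a c p)))
    \<and> (k \<noteq> 0 \<longrightarrow> (\<forall>S. S \<subseteq> regions H \<sigma> \<alpha> \<longrightarrow>
         (let n = card (verts H \<sigma>); i = card S; q = num_solvable_avoiding H \<sigma> \<alpha> k a S in
           (S \<inter> sh \<noteq> {} \<and> S - sh \<noteq> {} \<longrightarrow> q = k ^ (n + 2 - i))
         \<and> (i \<ge> 1 \<and> (S \<subseteq> sh \<or> (S \<inter> sh = {} \<and> (\<forall>r\<in>S. \<forall>r'\<in>S. sg r = sg r'))) \<longrightarrow>
              q = k ^ (n + 1 - i))
         \<and> (S \<inter> sh = {} \<and> (\<exists>r\<in>S. \<exists>r'\<in>S. sg r \<noteq> sg r') \<longrightarrow>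
              (odd k \<longrightarrow> q = k ^ (n + 2 - i)) \<and> (even k \<longrightarrow> 2 * q = k ^ (n + 2 - i))))))"
proof -
  interpret kd H \<sigma> \<alpha> k a sh sg using D red ver cb sgn by unfold_locales
  have P1: "\<forall>r\<in>sh. \<forall>r'\<in>regions H \<sigma> \<alpha> - sh. \<forall>c\<in>vecs k (verts H \<sigma>).
       \<exists>!p. p \<in> vecs k (regions H \<sigma> \<alpha>) \<and> p r = 0 \<and> p r' = 0 \<and> solving H \<sigma> \<alpha> k a c p"
  proof (intro ballI)
    fix r r' c assume r: "r \<in> sh" and r': "r' \<in> regions H \<sigma> \<alpha> - sh" and c: "c \<in> vecs k (verts H \<sigma>)"
    have rF: "r \<in> F" using r sh_sub by blast
    have rr: "r \<noteq> r'" using r r' by blast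
    show "\<exists>!p. p \<in> vecs k (regions H \<sigma> \<alpha>) \<and> p r = 0 \<and> p r' = 0 \<and> solving H \<sigma> \<alpha> k a c p"
    proof (cases "k = 0")
      case True
      have kd0: "kd H \<sigma> \<alpha> 0 a sh sg" using True kd_axioms by simp
      obtain p where p: "p \<in> vecs 0 F" "p r = 0" "p r' = 0" "solving H \<sigma> \<alpha> 0 a c p"
        using exist0[OF kd0 r, of r' c] r' c True by auto
      show ?thesis
      proof (rule ex1I[of _ p])
        show "p \<in> vecs k F \<and> p r = 0 \<and> p r' = 0 \<and> solving H \<sigma> \<alpha> k a c p" using p True by simp
      next
        fix q assume q: "q \<in> vecs k F \<and> q r = 0 \<and> q r' = 0 \<and> solving H \<sigma> \<alpha> k a c q"
        show "q = p" using uniq0[OF True r, of r' q c p] q p r' True by auto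
      qed
    next
      case False
      then have kp: "0 < k" by simp
      have T: "{r, r'} \<subseteq> F" "card {r, r'} = 2" using rF r' rr by auto
      have kl: "kills {r, r'}" using kill1[OF kp r] r' by auto
      show ?thesis using uniq_exist[OF kp T kl c] by simp
    qed
  qed
  have P2: "(k \<noteq> 0 \<and> odd k) \<longrightarrow>
       (\<forall>r\<in>regions H \<sigma> \<alpha> - sh. \<forall>r'\<in>regions H \<sigma> \<alpha> - sh. sg r \<noteq> sg r' \<longrightarrow>
         (\<forall>c\<in>vecs k (verts H \<sigma>).
           \<exists>!p. p \<in> vecs k (regions H \<sigma> \<alpha>) \<and> p r = 0 \<and> p r' = 0 \<and> solving H \<sigma> \<alpha> k a c p))"
  proof (intro impI ballI)
    fix r r' c assume ko: "k \<noteq> 0 \<and> odd k" and r: "r \<in> regions H \<sigma> \<alpha> - sh" and r': "r' \<in> regions H \<sigma> \<alpha> - sh"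
      and s: "sg r \<noteq> sg r'" and c: "c \<in> vecs k (verts H \<sigma>)"
    have kp: "0 < k" using ko by simp
    have rr: "r \<noteq> r'" using s by blast
    have T: "{r, r'} \<subseteq> F" "card {r, r'} = 2" using r r' rr by auto
    have kl: "kills {r, r'}" using kill2[OF kp] ko r r' s by auto
    show "\<exists>!p. p \<in> vecs k (regions H \<sigma> \<alpha>) \<and> p r = 0 \<and> p r' = 0 \<and> solving H \<sigma> \<alpha> k a c p"
      using uniq_exist[OF kp T kl c] by simp
  qed
  have P3: "k \<noteq> 0 \<longrightarrow> (\<forall>S. S \<subseteq> regions H \<sigma> \<alpha> \<longrightarrow>
         (let n = card (verts H \<sigma>); i = card S; q = num_solvable_avoiding H \<sigma> \<alpha> k a S in
           (S \<inter> sh \<noteq> {} \<and> S - sh \<noteq> {} \<longrightarrow> q = k ^ (n + 2 - i))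
         \<and> (i \<ge> 1 \<and> (S \<subseteq> sh \<or> (S \<inter> sh = {} \<and> (\<forall>r\<in>S. \<forall>r'\<in>S. sg r = sg r'))) \<longrightarrow>
              q = k ^ (n + 1 - i))
         \<and> (S \<inter> sh = {} \<and> (\<exists>r\<in>S. \<exists>r'\<in>S. sg r \<noteq> sg r') \<longrightarrow>
              (odd k \<longrightarrow> q = k ^ (n + 2 - i)) \<and> (even k \<longrightarrow> 2 * q = k ^ (n + 2 - i)))))"
  proof (intro impI allI)
    fix S assume k0: "k \<noteq> 0" and SF: "S \<subseteq> regions H \<sigma> \<alpha>"
    have kp: "0 < k" using k0 by simp
    define n where "n = card VS"
    define i where "i = card S"
    define q where "q = num_solvable_avoiding H \<sigma> \<alpha> k a S"
    have cm: "q * card (TT S) = k ^ (n + 2 - i)" using count_main[OF kp SF] unfolding q_def n_def i_def .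
    have c1: "S \<inter> sh \<noteq> {} \<and> S - sh \<noteq> {} \<longrightarrow> q = k ^ (n + 2 - i)"
    proof
      assume "S \<inter> sh \<noteq> {} \<and> S - sh \<noteq> {}"
      then obtain rs ru where "rs \<in> S" "rs \<in> sh" "ru \<in> S" "ru \<notin> sh" by blast
      then have "card (TT S) = 1" using TT_a[OF kp SF] by blast
      then show "q = k ^ (n + 2 - i)" using cm by simp
    qed
    have c2: "i \<ge> 1 \<and> (S \<subseteq> sh \<or> (S \<inter> sh = {} \<and> (\<forall>r\<in>S. \<forall>r'\<in>S. sg r = sg r'))) \<longrightarrow> q = k ^ (n + 1 - i)"
    proof
      assume h: "i \<ge> 1 \<and> (S \<subseteq> sh \<or> (S \<inter> sh = {} \<and> (\<forall>r\<in>S. \<forall>r'\<in>S. sg r = sg r')))"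
      have ne: "S \<noteq> {}" using h unfolding i_def by auto
      obtain r0 r1 where rr: "r0 \<in> F" "r0 \<in> sh" "r1 \<in> F" "r1 \<notin> sh" using shex by blast
      have ctt: "card (TT S) = k" and ps: "S \<subset> F"
      proof -
        from h show "card (TT S) = k" using TT_b[OF kp _ ne] TT_c[OF kp SF _ ne] by blast
        from h show "S \<subset> F" using SF rr by blast
      qed
      have "i < n + 2" using psubset_card_mono[OF finF ps] cardF unfolding i_def n_def by simp
      then have e: "n + 2 - i = Suc (n + 1 - i)" by simp
      have "q * k = k * k ^ (n + 1 - i)" using cm ctt e by simp
      then show "q = k ^ (n + 1 - i)" using kp by (simp add: mult.commute)
    qed
    have c3: "S \<inter> sh = {} \<and> (\<exists>r\<in>S. \<exists>r'\<in>S. sg r \<noteq> sg r') \<longrightarrow>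
              (odd k \<longrightarrow> q = k ^ (n + 2 - i)) \<and> (even k \<longrightarrow> 2 * q = k ^ (n + 2 - i))"
    proof
      assume h: "S \<inter> sh = {} \<and> (\<exists>r\<in>S. \<exists>r'\<in>S. sg r \<noteq> sg r')"
      have "(odd k \<longrightarrow> card (TT S) = 1) \<and> (even k \<longrightarrow> card (TT S) = 2)" using TT_d[OF kp SF] h by blast
      then show "(odd k \<longrightarrow> q = k ^ (n + 2 - i)) \<and> (even k \<longrightarrow> 2 * q = k ^ (n + 2 - i))"
        using cm by (auto simp: mult.commute)
    qed
    show "let n = card (verts H \<sigma>); i = card S; q = num_solvable_avoiding H \<sigma> \<alpha> k a S in
           (S \<inter> sh \<noteq> {} \<and> S - sh \<noteq> {} \<longrightarrow> q = k ^ (n + 2 - i))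
         \<and> (i \<ge> 1 \<and> (S \<subseteq> sh \<or> (S \<inter> sh = {} \<and> (\<forall>r\<in>S. \<forall>r'\<in>S. sg r = sg r'))) \<longrightarrow>
              q = k ^ (n + 1 - i))
         \<and> (S \<inter> sh = {} \<and> (\<exists>r\<in>S. \<exists>r'\<in>S. sg r \<noteq> sg r') \<longrightarrow>
              (odd k \<longrightarrow> q = k ^ (n + 2 - i)) \<and> (even k \<longrightarrow> 2 * q = k ^ (n + 2 - i)))"
      unfolding Let_def using c1 c2 c3 unfolding n_def i_def q_def by blast
  qed
  show ?thesis using P1 P2 P3 by blast
qed


end
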